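(* Let $C=(C_{jl})\in\mathbb R^{d\times d}$ satisfy Condition A, let $f(t)$ solve $\partial_tf=\mathrm{div}_x(C_S\nabla_xf+Cxf)$ in $\mathcal H$, with Hermite coefficients $d_\alpha(t)=\langle f(t),g_\alpha\rangle_{\mathcal H}/\|g_\alpha\|_{\mathcal H}^2$, and fix $m\ge1$. Define $D^{(m)}_\alpha(t):=d_\alpha(t)/\gamma_\alpha$ for $\alpha\in S^{(m)}$, where $\gamma_\alpha=\frac{m!}{\alpha_1!\cdots\alpha_d!}$. Then for every $\alpha\in S^{(m)}$, $$\dot D^{(m)}_\alpha=-\sum_{j,l=1}^d\alpha_jC_{jl}\,D^{(m)}_{(\alpha^{(j-)})^{(l+)}} .$$
   Context: $C_S=\frac12(C+C^T)$. Condition A: (1) $C_S$ positive semi-definite; (2) no non-trivial $C^T$-invariant subspace of $\ker C_S$. $f_\infty(x)=(2\pi)^{-d/2}e^{-|x|^2/2}$, $\mathcal H=L^2(\mathbb R^d,f_\infty^{-1})$ with inner product $\int fgf_\infty^{-1}dx$. With $g(y)=(2\pi)^{-1/2}e^{-y^2/2}$ and probabilists' Hermite polynomials $H_n(y)=(-1)^ne^{y^2/2}\frac{d^n}{dy^n}e^{-y^2/2}$, $g_\alpha(x)=\prod_{i=1}^dH_{\alpha_i}(x_i)g(x_i)$, an orthogonal basis of $\mathcal H$. $S^{(m)}=\{\alpha\in\mathbb N_0^d:|\alpha|=\alpha_1+\dots+\alpha_d=m\}$. For $\alpha\in\mathbb N_0^d$ and $l\in\{1,\dots,d\}$: $\alpha^{(l\pm)}_j=\alpha_j$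 for $j\ne l$ and $\alpha^{(l\pm)}_l=(\alpha_l\pm1)_+$. (Terms with $\alpha_j=0$ vanish; the family $(D^{(m)}_\alpha)_{\alpha\in S^{(m)}}$ is identified with the symmetric $m$-tensor $D^{(m)}$ whose entry at $(i_1,\dots,i_m)$ is $D^{(m)}_\alpha$ with $\alpha_k=\#\{r:i_r=k\}$.) *)

theory Defs
  imports "HOL-Analysis.Analysis"
begin

definition sym_part :: "real^'d^'d \<Rightarrow> real^'d^'d" where
  "sym_part C = (1/2) *\<^sub>R (C + transpose C)"

definition conditionA :: "real^'d^'d \<Rightarrow> bool" where
  "conditionA C \<longleftrightarrow>
     (\<forall>x. 0 \<le> x \<bullet> (sym_part C *v x)) \<and>
     (\<forall>V. subspace V \<and> V \<subseteq> {x. sym_part C *v x = 0} \<and>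
          (\<forall>v\<in>V. transpose C *v v \<in> V) \<longrightarrow> V = {0})"

definition finf :: "real^'d \<Rightarrow> real" where
  "finf x = (2*pi) powr (- real CARD('d) / 2) * exp (- ((norm x)^2) / 2)"

definition inH :: "(real^'d \<Rightarrow> real) \<Rightarrow> bool" where
  "inH u \<longleftrightarrow> u \<in> borel_measurable lborel \<and>
     integrable lborel (\<lambda>x. (u x)^2 / finf x)"

definition Hinner :: "(real^'d \<Rightarrow> real) \<Rightarrow> (real^'d \<Rightarrow> real) \<Rightarrow> real" where
  "Hinner u v = (\<integral>x. u x * v x / finf x \<partial>lborel)"

definition Hnorm :: "(real^'d \<Rightarrow> real) \<Rightarrow> real" where
  "Hnorm u = sqrt (Hinner u u)"

definition gauss1 :: "real \<Rightarrow> real" where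
  "gauss1 y = exp (- (y^2) / 2) / sqrt (2*pi)"

definition hermite :: "nat \<Rightarrow> real \<Rightarrow> real" where
  "hermite n y = (-1)^n * exp (y^2 / 2) * (deriv ^^ n) (\<lambda>z. exp (- (z^2) / 2)) y"

definition g_alpha :: "('d \<Rightarrow> nat) \<Rightarrow> real^'d \<Rightarrow> real" where
  "g_alpha \<alpha> x = (\<Prod>i\<in>UNIV. hermite (\<alpha> i) (x$i) * gauss1 (x$i))"

definition mabs :: "('d::finite \<Rightarrow> nat) \<Rightarrow> nat" where
  "mabs \<alpha> = (\<Sum>i\<in>UNIV. \<alpha> i)"

definition multinom :: "('d::finite \<Rightarrow> nat) \<Rightarrow> real" where
  "multinom \<alpha> = fact (mabs \<alpha>) / (\<Prod>i\<in>UNIV. fact (\<alpha> i))"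

definition hcoeff :: "(real^'d \<Rightarrow> real) \<Rightarrow> ('d \<Rightarrow> nat) \<Rightarrow> real" where
  "hcoeff u \<alpha> = Hinner u (g_alpha \<alpha>) / (Hnorm (g_alpha \<alpha>))^2"

text \<open>alpha^(l-) and alpha^(l+) (nat subtraction truncates at 0).\<close>
definition mminus :: "('d \<Rightarrow> nat) \<Rightarrow> 'd \<Rightarrow> ('d \<Rightarrow> nat)" where
  "mminus \<alpha> l = \<alpha>(l := \<alpha> l - 1)"

definition mplus :: "('d \<Rightarrow> nat) \<Rightarrow> 'd \<Rightarrow> ('d \<Rightarrow> nat)" where
  "mplus \<alpha> l = \<alpha>(l := \<alpha> l + 1)"

definition pd :: "'d \<Rightarrow> (real^'d \<Rightarrow> real) \<Rightarrow> real^'d \<Rightarrow> real" where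
  "pd i \<phi> x = deriv (\<lambda>s. \<phi> (x + s *\<^sub>R axis i 1)) 0"

definition test_fun :: "(real^'d \<Rightarrow> real) \<Rightarrow> bool" where
  "test_fun \<phi> \<longleftrightarrow> (\<exists>R. \<forall>x. R < norm x \<longrightarrow> \<phi> x = 0) \<and>
     (\<forall>x. \<phi> differentiable (at x)) \<and>
     (\<forall>i x. pd i \<phi> differentiable (at x)) \<and>
     (\<forall>i j. continuous_on UNIV (pd j (pd i \<phi>)))"

text \<open>Formal adjoint of L f = div(C_S grad f + C x f).\<close>
definition Lstar :: "real^'d^'d \<Rightarrow> (real^'d \<Rightarrow> real) \<Rightarrow> real^'d \<Rightarrow> real" where
  "Lstar C \<phi> x = (\<Sum>i\<in>UNIV. \<Sum>j\<in>UNIV. sym_part C $ i $ j * pd i (pd j \<phi>) x)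
                 - (\<Sum>i\<in>UNIV. (C *v x) $ i * pd i \<phi> x)"

text \<open>f solves d/dt f = div(C_S grad f + C x f) in H for t > 0: f(t) is in H,
  t \<mapsto> f(t) is differentiable in the norm of H, and the derivative equals
  div(C_S grad f(t) + C x f(t)) in the sense of distributions.\<close>
definition FP_solution_H :: "real^'d^'d \<Rightarrow> (real \<Rightarrow> real^'d \<Rightarrow> real) \<Rightarrow> bool" where
  "FP_solution_H C f \<longleftrightarrow> (\<forall>t>0. inH (f t) \<and>
     (\<exists>f'. inH f' \<and>
        ((\<lambda>h. Hnorm (\<lambda>x. (f (t + h) x - f t x) / h - f' x)) \<longlongrightarrow> 0) (at 0) \<and>
        (\<forall>\<phi>. test_fun \<phi> \<longrightarrow>
           (\<integral>x. f' x * \<phi> x \<partial>lborel) = (\<integral>x. f t x * Lstar C \<phi> x \<partial>lborel))))"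

end

theory Submission
  imports Defs "HOL-Probability.Distributions" "HOL-Computational_Algebra.Polynomial"
begin


lemma Basis_vec_real: "(Basis :: (real^'d) set) = range (\<lambda>k. axis k 1)"
  by (auto simp: Basis_vec_def)

lemma inj_axis1: "inj (\<lambda>k::'d::finite. axis k (1::real))"
  by (auto simp: inj_def axis_eq_axis)

lemma prod_Basis_vec:
  fixes F :: "real^'d \<Rightarrow> 'b::comm_monoid_mult"
  shows "(\<Prod>b\<in>Basis. F b) = (\<Prod>k\<in>UNIV. F (axis k 1))"
  unfolding Basis_vec_real by (subst prod.reindex[OF inj_axis1]) simp

lemma nn_integral_vec_prod:
  fixes h :: "'d::finite \<Rightarrow> real \<Rightarrow> ennreal"
  assumes [measurable]: "\<And>k. h k \<in> borel_measurable borel"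
  shows "(\<integral>\<^sup>+x. (\<Prod>k\<in>UNIV. h k (x$k)) \<partial>(lborel::(real^'d) measure)) = (\<Prod>k\<in>UNIV. (\<integral>\<^sup>+y. h k y \<partial>lborel))"
proof -
  define bi where "bi b = (SOME k. axis k (1::real) = (b::real^'d))" for b
  have bi: "bi (axis k 1) = k" for k
    unfolding bi_def by (rule someI2[of _ k]) (auto simp: axis_eq_axis)
  have "(\<integral>\<^sup>+x. (\<Prod>b\<in>Basis. h (bi b) (x \<bullet> b)) \<partial>(lborel::(real^'d) measure)) = (\<Prod>b\<in>Basis. (\<integral>\<^sup>+y. h (bi b) y \<partial>lborel))"
    by (rule nn_integral_lborel_prod) auto
  then show ?thesis
    by (simp add: prod_Basis_vec bi cart_eq_inner_axis[symmetric])
qed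

lemma integrable_vec_prod:
  fixes h :: "'d::finite \<Rightarrow> real \<Rightarrow> real"
  assumes "\<And>k. integrable lborel (h k)"
  shows "integrable (lborel::(real^'d) measure) (\<lambda>x. \<Prod>k\<in>UNIV. h k (x$k))"
proof (subst integrable_iff_bounded, intro conjI)
  have m[measurable]: "h k \<in> borel_measurable borel" for k
    using assms[of k] by auto
  show "(\<lambda>x. \<Prod>k\<in>UNIV. h k (x$k)) \<in> borel_measurable lborel" by measurable
  have "(\<integral>\<^sup>+x. ennreal (norm (\<Prod>k\<in>UNIV. h k (x$k))) \<partial>(lborel::(real^'d) measure))
      = (\<integral>\<^sup>+x. (\<Prod>k\<in>UNIV. ennreal (norm (h k (x$k)))) \<partial>lborel)"
    by (simp add: abs_prod prod_ennreal)
  also have "\<dots> = (\<Prod>k\<in>UNIV. (\<integral>\<^sup>+y. ennreal (norm (h k y)) \<partial>lborel))"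
    by (rule nn_integral_vec_prod) measurable
  also have "\<dots> < \<infinity>"
    using assms by (simp add: less_top[symmetric] ennreal_prod_eq_top integrable_iff_bounded)
  finally show "(\<integral>\<^sup>+x. ennreal (norm (\<Prod>k\<in>UNIV. h k (x$k))) \<partial>(lborel::(real^'d) measure)) < \<infinity>" .
qed

lemma enn2real_prod': "finite A \<Longrightarrow> enn2real (\<Prod>k\<in>A. f k) = (\<Prod>k\<in>A. enn2real (f k))"
  by (induction A rule: finite_induct) (auto simp: enn2real_mult)

lemma integral_vec_prod_nonneg:
  fixes h :: "'d::finite \<Rightarrow> real \<Rightarrow> real"
  assumes "\<And>k. integrable lborel (h k)" and "\<And>k y. 0 \<le> h k y"
  shows "(\<integral>x. (\<Prod>k\<in>UNIV. h k (x$k)) \<partial>(lborel::(real^'d) measure)) = (\<Prod>k\<in>UNIV. (\<integral>y. h k y \<partial>lborel))"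
proof -
  have m[measurable]: "h k \<in> borel_measurable borel" for k
    using assms(1)[of k] by auto
  have "(\<integral>x. (\<Prod>k\<in>UNIV. h k (x$k)) \<partial>(lborel::(real^'d) measure))
      = enn2real (\<integral>\<^sup>+x. ennreal (\<Prod>k\<in>UNIV. h k (x$k)) \<partial>lborel)"
    by (rule integral_eq_nn_integral) (auto intro: prod_nonneg assms(2))
  also have "\<dots> = enn2real (\<integral>\<^sup>+x. (\<Prod>k\<in>UNIV. ennreal (h k (x$k))) \<partial>lborel)"
    by (simp add: prod_ennreal assms(2))
  also have "\<dots> = enn2real (\<Prod>k\<in>UNIV. (\<integral>\<^sup>+y. ennreal (h k y) \<partial>lborel))"
    by (subst nn_integral_vec_prod) auto
  also have "\<dots> = (\<Prod>k\<in>UNIV. enn2real (\<integral>\<^sup>+y. ennreal (h k y) \<partial>lborel))"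
    by (simp add: enn2real_prod')
  also have "\<dots> = (\<Prod>k\<in>UNIV. (\<integral>y. h k y \<partial>lborel))"
    by (intro prod.cong refl, rule integral_eq_nn_integral[symmetric]) (auto simp: assms(2))
  finally show ?thesis .
qed


fun He :: "nat \<Rightarrow> real poly" where
  "He 0 = 1"
| "He (Suc n) = [:0,1:] * He n - pderiv (He n)"

declare He.simps(2)[simp del]

lemma pderiv_He_Suc: "pderiv (He (Suc n)) = smult (real (Suc n)) (He n)"
proof (induction n)
  case 0
  then show ?case by (simp add: pderiv_pCons He.simps(2))
next
  case (Suc n)
  have "pderiv (He (Suc (Suc n))) = pderiv ([:0,1:] * He (Suc n)) - pderiv (pderiv (He (Suc n)))"
    by (subst He.simps(2)) (simp add: pderiv_diff)
  also have "\<dots> = He (Suc n) + [:0,1:] * pderiv (He (Suc n)) - pderiv (pderiv (He (Suc n)))"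
    by (simp add: pderiv_mult pderiv_pCons)
  also have "\<dots> = He (Suc n) + smult (real (Suc n)) ([:0,1:] * He n - pderiv (He n))"
    by (simp add: Suc pderiv_smult algebra_simps smult_diff_right)
  also have "\<dots> = smult (real (Suc (Suc n))) (He (Suc n))"
    using smult_add_left[of "real (Suc n)" 1 "He (Suc n)"] by (simp add: He.simps(2) add.commute)
  finally show ?case .
qed

lemma pderiv_He: "pderiv (He n) = smult (real n) (He (n - 1))"
  by (cases n) (simp_all add: pderiv_He_Suc)

lemma x_He: "[:0,1:] * He n = He (Suc n) + smult (real n) (He (n - 1))"
  by (simp add: pderiv_He He.simps(2))

lemma poly_x_He: "y * poly (He n) y = poly (He (Suc n)) y + real n * poly (He (n - 1)) y"
  using arg_cong[OF x_He, of "\<lambda>p. poly p y"] by simp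

lemma deriv_gauss_He:
  "(deriv ^^ n) (\<lambda>z. exp (- (z^2) / 2)) = (\<lambda>z. (-1)^n * poly (He n) z * exp (- (z^2) / 2))"
proof (induction n)
  case 0
  then show ?case by simp
next
  case (Suc n)
  have d: "((\<lambda>z. (-1)^n * poly (He n) z * exp (- (z^2) / 2)) has_real_derivative
      (-1)^Suc n * poly (He (Suc n)) z * exp (- (z^2) / 2)) (at z)" for z
  proof -
    have "((\<lambda>z. (-1)^n * poly (He n) z * exp (- (z^2) / 2)) has_real_derivative
      (-1)^n * poly (pderiv (He n)) z * exp (- (z^2) / 2) + (-1)^n * poly (He n) z * (exp (- (z^2) / 2) * (- z))) (at z)"
      by (auto intro!: derivative_eq_intros simp: field_simps)
    moreover have "(-1)^n * poly (pderiv (He n)) z * exp (- (z^2) / 2) + (-1)^n * poly (He n) z * (exp (- (z^2) / 2) * (- z))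
        = (-1)^Suc n * poly (He (Suc n)) z * exp (- (z^2) / 2)"
      by (simp add: algebra_simps He.simps(2))
    ultimately show ?thesis by simp
  qed
  have "(deriv ^^ Suc n) (\<lambda>z. exp (- (z^2) / 2)) = deriv ((deriv ^^ n) (\<lambda>z. exp (- (z^2) / 2)))"
    by simp
  also have "\<dots> = (\<lambda>z. (-1)^Suc n * poly (He (Suc n)) z * exp (- (z^2) / 2))"
    unfolding Suc by (rule ext, rule DERIV_imp_deriv, rule d)
  finally show ?case .
qed

lemma hermite_He: "hermite n y = poly (He n) y"
proof -
  have "hermite n y = ((-1)^n * (-1)^n) * poly (He n) y * (exp (y^2/2) * exp (- (y^2) / 2))"
    unfolding hermite_def deriv_gauss_He by (simp add: algebra_simps)
  also have "\<dots> = poly (He n) y"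
    by (simp add: exp_add[symmetric] power_mult_distrib[symmetric])
  finally show ?thesis .
qed

lemma gauss1_std: "gauss1 = std_normal_density"
  by (rule ext) (simp add: gauss1_def std_normal_density_def)

lemma gauss1_pos: "gauss1 y > 0"
  by (simp add: gauss1_def)

definition M :: "nat \<Rightarrow> real" where "M k = (\<integral>x. std_normal_density x * x^k \<partial>lborel)"

lemma M_1: "M (Suc 0) = 0"
  using integral_std_normal_moment_odd[of 0] by (simp add: M_def)

lemma M_rec: "M (Suc (Suc k)) = real (Suc k) * M k"
proof (cases "even k")
  case True
  then obtain j where k: "k = 2*j" by (auto elim: evenE)
  have e1: "Suc (Suc k) = 2 * Suc j" using k by simp
  have "M (Suc (Suc k)) = fact (2 * Suc j) / (2^Suc j * fact (Suc j))"
    unfolding M_def e1 by (rule integral_std_normal_moment_even)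
  also have "\<dots> = real (Suc k) * (fact (2*j) / (2^j * fact j))"
  proof -
    have a: "(fact (2 * Suc j) :: real) = (2*j+2)*(2*j+1) * fact (2*j)"
      by (simp add: algebra_simps)
    have b: "(fact (Suc j) :: real) = (j+1) * fact j" by (simp add: algebra_simps)
    have fj: "(fact j :: real) > 0" by simp
    show ?thesis unfolding a b k using fj
      by (simp add: divide_simps add_pos_nonneg[THEN less_imp_neq, symmetric]) (simp add: algebra_simps)
  qed
  also have "\<dots> = real (Suc k) * M k"
    unfolding M_def k by (simp add: integral_std_normal_moment_even)
  finally show ?thesis .
next
  case False
  then obtain j where k: "k = 2*j+1" by (metis oddE)
  have e1: "Suc (Suc k) = 2 * Suc j + 1" using k by simp
  show ?thesis
    unfolding M_def e1 using integral_std_normal_moment_odd[of j] integral_std_normal_moment_odd[of "Suc j"]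
    by (simp add: k)
qed

lemma integrable_poly_gauss: "integrable lborel (\<lambda>x. poly p x * gauss1 x)"
proof -
  have "(\<lambda>x. poly p x * gauss1 x) = (\<lambda>x. \<Sum>i\<le>degree p. coeff p i * (std_normal_density x * x^i))"
    by (rule ext) (simp add: poly_altdef gauss1_std sum_distrib_left sum_distrib_right mult_ac)
  then show ?thesis
    by (simp add: integrable_std_normal_moment)
qed

definition I :: "real poly \<Rightarrow> real" where "I p = (\<integral>x. poly p x * gauss1 x \<partial>lborel)"

lemma I_add: "I (p + q) = I p + I q"
  unfolding I_def by (simp add: distrib_right integrable_poly_gauss)

lemma I_diff: "I (p - q) = I p - I q"
  unfolding I_def by (simp add: left_diff_distrib integrable_poly_gauss)

lemma I_smult: "I (smult c p) = c * I p"
  unfolding I_def by (simp add: mult.assoc)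

lemma I_sum: "finite A \<Longrightarrow> I (\<Sum>i\<in>A. f i) = (\<Sum>i\<in>A. I (f i))"
  by (induction A rule: finite_induct) (simp_all add: I_add, simp add: I_def)

lemma I_monom: "I (monom c n) = c * M n"
  unfolding I_def M_def by (simp add: poly_monom gauss1_std algebra_simps)

lemma stein: "I ([:0,1:] * p) = I (pderiv p)"
proof -
  have st: "I ([:0,1:] * monom c n) = I (pderiv (monom c n))" for c n
  proof -
    have "[:0,1:] * monom c n = monom c (Suc n)"
      by (simp add: monom_Suc)
    then have "I ([:0,1:] * monom c n) = c * M (Suc n)" by (simp add: I_monom)
    moreover have "I (pderiv (monom c n)) = c * real n * M (n - 1)"
      by (simp add: pderiv_monom I_monom)
    ultimately show ?thesis
      by (cases n) (simp_all add: M_1 M_rec)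
  qed
  have "p = (\<Sum>i\<le>degree p. monom (coeff p i) i)"
    by (rule poly_as_sum_of_monoms[symmetric])
  then have "I ([:0,1:] * p) = (\<Sum>i\<le>degree p. I ([:0,1:] * monom (coeff p i) i))"
    by (metis I_sum finite_atMost sum_distrib_left)
  also have "\<dots> = (\<Sum>i\<le>degree p. I (pderiv (monom (coeff p i) i)))"
    using st by simp
  also have "\<dots> = I (pderiv p)"
    using higher_pderiv_sum[of 1 "\<lambda>i. monom (coeff p i) i" "{..degree p}"]
    by (subst (2) \<open>p = _\<close>) (simp add: I_sum)
  finally show ?thesis .
qed

lemma I_He_sq: "I (He n * He n) = fact n"
proof (induction n)
  case 0
  then show ?case
    using integral_std_normal_moment_even[of 0] by (simp add: I_def gauss1_std)
next
  case (Suc n)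
  have e: "He (Suc n) * He (Suc n) = [:0,1:] * (He n * He (Suc n)) - pderiv (He n) * He (Suc n)"
    by (subst (1) He.simps(2)) (simp add: algebra_simps)
  have "I (He (Suc n) * He (Suc n)) = I ([:0,1:] * (He n * He (Suc n))) - I (pderiv (He n) * He (Suc n))"
    unfolding e by (rule I_diff)
  also have "\<dots> = I (He n * pderiv (He (Suc n)))"
    unfolding stein pderiv_mult I_add by (simp add: mult.commute)
  also have "\<dots> = real (Suc n) * I (He n * He n)"
    by (simp add: pderiv_He_Suc I_smult)
  finally show ?case using Suc by simp
qed


lemma norm_sq_vec: "(norm (x::real^'d))^2 = (\<Sum>k\<in>UNIV. (x$k)^2)"
  by (subst power2_norm_eq_inner) (simp add: inner_vec_def power2_eq_square)

lemma finf_prod: "finf (x::real^'d) = (\<Prod>k\<in>UNIV. gauss1 (x$k))"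
proof -
  have "(\<Prod>k\<in>UNIV. gauss1 (x$k)) = (\<Prod>k\<in>UNIV. exp (- ((x$k)^2) / 2)) / (\<Prod>k\<in>(UNIV::'d set). sqrt (2*pi))"
    unfolding gauss1_def by (rule prod_dividef)
  also have "(\<Prod>k\<in>UNIV. exp (- ((x$k)^2) / 2)) = exp (- ((norm x)^2) / 2)"
    by (simp add: exp_sum[symmetric] norm_sq_vec sum_divide_distrib sum_negf)
  also have "(\<Prod>k\<in>(UNIV::'d set). sqrt (2*pi)) = (2*pi) powr (real CARD('d) / 2)"
    by (simp add: powr_half_sqrt[symmetric] powr_power)
  finally show ?thesis
    unfolding finf_def by (simp add: powr_minus divide_simps)
qed

lemma finf_pos: "finf x > 0"
  by (simp add: finf_def)

definition Hpoly :: "('d::finite \<Rightarrow> nat) \<Rightarrow> real^'d \<Rightarrow> real" where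
  "Hpoly \<alpha> x = (\<Prod>k\<in>UNIV. poly (He (\<alpha> k)) (x$k))"

lemma g_alpha_eq: "g_alpha \<alpha> x = Hpoly \<alpha> x * finf x"
  unfolding g_alpha_def Hpoly_def finf_prod hermite_He by (simp add: prod.distrib)

lemma g_alpha_div: "g_alpha \<alpha> x / finf x = Hpoly \<alpha> x"
  using finf_pos[of x] by (simp add: g_alpha_eq)

lemma amgm: fixes a b c :: real shows "c > 0 \<Longrightarrow> \<bar>a * b\<bar> \<le> a^2 / c + b^2 * c"
proof -
  assume c: "c > 0"
  have "0 \<le> (\<bar>a\<bar> - \<bar>b\<bar> * c)^2 / c" using c by simp
  also have "(\<bar>a\<bar> - \<bar>b\<bar> * c)^2 / c = a^2 / c - 2 * \<bar>a * b\<bar> + b^2 * c"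
    using c by (simp add: power2_eq_square field_simps abs_mult)
  finally have "2 * (\<bar>a\<bar> * \<bar>b\<bar>) \<le> a^2 / c + b^2 * c" by (simp add: abs_mult)
  moreover have "0 \<le> \<bar>a\<bar> * \<bar>b\<bar>" by simp
  ultimately show ?thesis unfolding abs_mult by linarith
qed

lemma continuous_poly_comp[continuous_intros]: "continuous_on S (\<lambda>x::real^'d. poly p (x$k))"
  by (intro continuous_intros)

lemma Hpoly_cont: "continuous_on UNIV (Hpoly \<alpha>)"
  unfolding Hpoly_def[abs_def] by (intro continuous_intros)

lemma Hpoly_meas[measurable]: "Hpoly \<alpha> \<in> borel_measurable borel"
  by (rule borel_measurable_continuous_onI[OF Hpoly_cont])

lemma finf_meas[measurable]: "finf \<in> borel_measurable borel"
  unfolding finf_def[abs_def] by measurable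

lemma integrable_H_mult:
  fixes u w :: "real^'d \<Rightarrow> real"
  assumes "inH u" and [measurable]: "w \<in> borel_measurable borel"
    and "integrable lborel (\<lambda>x. (w x)^2 * finf x)"
  shows "integrable lborel (\<lambda>x. u x * w x)"
proof (rule Bochner_Integration.integrable_bound)
  show "integrable lborel (\<lambda>x. (u x)^2 / finf x + (w x)^2 * finf x)"
    using assms(1,3) unfolding inH_def by auto
  have [measurable]: "u \<in> borel_measurable borel" using assms(1) by (simp add: inH_def)
  show "(\<lambda>x. u x * w x) \<in> borel_measurable lborel"
    by simp
  show "AE x in lborel. norm (u x * w x) \<le> norm ((u x)^2 / finf x + (w x)^2 * finf x)"
    by (intro AE_I2) (metis amgm finf_pos abs_ge_self order_trans real_norm_def)
qed

lemma integrable_poly_prod_finf: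
  fixes q :: "'d::finite \<Rightarrow> real poly"
  shows "integrable lborel (\<lambda>x::real^'d. (\<Prod>k\<in>UNIV. poly (q k) (x$k)) * finf x)"
proof -
  have "integrable lborel (\<lambda>x::real^'d. \<Prod>k\<in>UNIV. poly (q k) (x$k) * gauss1 (x$k))"
    by (rule integrable_vec_prod) (rule integrable_poly_gauss)
  then show ?thesis by (simp add: finf_prod prod.distrib)
qed

lemma Hpoly_sq_int: "integrable lborel (\<lambda>x. (Hpoly \<alpha> x)^2 * finf x)"
proof -
  have "(\<lambda>x. (Hpoly \<alpha> x)^2 * finf x) = (\<lambda>x. (\<Prod>k\<in>UNIV. poly (He (\<alpha> k) * He (\<alpha> k)) (x$k)) * finf x)"
    by (rule ext) (simp add: Hpoly_def power2_eq_square prod.distrib)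
  then show ?thesis using integrable_poly_prod_finf[of "\<lambda>k. He (\<alpha> k) * He (\<alpha> k)"] by simp
qed

lemma inH_g: "inH (g_alpha \<alpha>)"
proof -
  have "(\<lambda>x. (g_alpha \<alpha> x)^2 / finf x) = (\<lambda>x. (Hpoly \<alpha> x)^2 * finf x)"
    using finf_pos by (auto simp: g_alpha_eq power2_eq_square field_simps)
  moreover have "g_alpha \<alpha> \<in> borel_measurable lborel"
    unfolding g_alpha_eq[abs_def] by measurable
  ultimately show ?thesis unfolding inH_def using Hpoly_sq_int by simp
qed

lemma Hinner_g: "Hinner u (g_alpha \<alpha>) = (\<integral>x. u x * Hpoly \<alpha> x \<partial>lborel)"
  unfolding Hinner_def by (rule Bochner_Integration.integral_cong) (auto simp: g_alpha_div[symmetric])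

lemma Hinner_gg: "Hinner (g_alpha \<alpha>) (g_alpha \<alpha>) = (\<Prod>k\<in>UNIV. fact (\<alpha> k))"
proof -
  have "Hinner (g_alpha \<alpha>) (g_alpha \<alpha>) = (\<integral>x. (\<Prod>k\<in>UNIV. poly (He (\<alpha> k)) (x$k) ^ 2 * gauss1 (x$k)) \<partial>lborel)"
    unfolding Hinner_g by (simp add: g_alpha_eq finf_prod Hpoly_def prod.distrib power2_eq_square mult_ac)
  also have "\<dots> = (\<Prod>k\<in>UNIV. (\<integral>y. poly (He (\<alpha> k)) y ^ 2 * gauss1 y \<partial>lborel))"
    by (rule integral_vec_prod_nonneg)
       (auto simp: power2_eq_square integrable_poly_gauss[of "He _ * He _", simplified] gauss1_pos less_imp_le)
  also have "\<dots> = (\<Prod>k\<in>UNIV. fact (\<alpha> k))"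
    using I_He_sq by (simp add: I_def power2_eq_square)
  finally show ?thesis .
qed

lemma Hnorm_g_sq: "(Hnorm (g_alpha \<alpha>))^2 = (\<Prod>k\<in>UNIV. fact (\<alpha> k))"
  unfolding Hnorm_def Hinner_gg by (simp add: prod_nonneg)

lemma multinom_N: "multinom \<alpha> * (\<Prod>k\<in>UNIV. fact (\<alpha> k)) = fact (mabs \<alpha>)"
  unfolding multinom_def by (simp add: prod_nonneg)


lemma inH_meas: "inH u \<Longrightarrow> u \<in> borel_measurable borel"
  by (simp add: inH_def)

lemma inH_lin:
  fixes u v :: "real^'d \<Rightarrow> real"
  assumes "inH u" "inH v"
  shows "inH (\<lambda>x. a * u x + b * v x)"
  unfolding inH_def
proof
  have [measurable]: "u \<in> borel_measurable borel" "v \<in> borel_measurable borel"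
    using assms by (auto simp: inH_meas)
  show "(\<lambda>x. a * u x + b * v x) \<in> borel_measurable lborel" by simp
  show "integrable lborel (\<lambda>x. (a * u x + b * v x)^2 / finf x)"
  proof (rule Bochner_Integration.integrable_bound)
    show "integrable lborel (\<lambda>x. 2 * a^2 * ((u x)^2 / finf x) + 2 * b^2 * ((v x)^2 / finf x))"
      by (intro Bochner_Integration.integrable_add integrable_mult_right) (use assms in \<open>auto simp: inH_def\<close>)
    show "(\<lambda>x. (a * u x + b * v x)^2 / finf x) \<in> borel_measurable lborel" by simp
    show "AE x in lborel. norm ((a * u x + b * v x)^2 / finf x) \<le> norm (2 * a^2 * ((u x)^2 / finf x) + 2 * b^2 * ((v x)^2 / finf x))"
    proof (intro AE_I2)
      fix x :: "real^'d"
      have f: "finf x > 0" by (rule finf_pos)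
      have "(a * u x + b * v x)^2 \<le> 2 * a^2 * (u x)^2 + 2 * b^2 * (v x)^2"
        using zero_le_power2[of "a * u x - b * v x"] by (simp add: power2_eq_square algebra_simps)
      then have "(a * u x + b * v x)^2 / finf x \<le> (2 * a^2 * (u x)^2 + 2 * b^2 * (v x)^2) / finf x"
        using f by (simp add: divide_right_mono)
      then show "norm ((a * u x + b * v x)^2 / finf x) \<le> norm (2 * a^2 * ((u x)^2 / finf x) + 2 * b^2 * ((v x)^2 / finf x))"
        using f by (simp add: add_divide_distrib)
    qed
  qed
qed

lemma integrable_Hinner:
  assumes "inH u" "inH w"
  shows "integrable lborel (\<lambda>x. u x * w x / finf x)"
proof -
  have [measurable]: "w \<in> borel_measurable borel" using assms by (simp add: inH_meas)
  have "integrable lborel (\<lambda>x. u x * (w x / finf x))"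
  proof (rule integrable_H_mult[OF assms(1)])
    show "(\<lambda>x. w x / finf x) \<in> borel_measurable borel" by measurable
    have "(\<lambda>x. (w x / finf x)^2 * finf x) = (\<lambda>x. (w x)^2 / finf x)"
      using finf_pos by (auto simp: power2_eq_square field_simps intro!: ext)
    then show "integrable lborel (\<lambda>x. (w x / finf x)^2 * finf x)"
      using assms(2) by (simp add: inH_def)
  qed
  then show ?thesis by simp
qed

lemma Hinner_lin:
  assumes "inH u" "inH v" "inH w"
  shows "Hinner (\<lambda>x. a * u x + b * v x) w = a * Hinner u w + b * Hinner v w"
proof -
  have "Hinner (\<lambda>x. a * u x + b * v x) w = (\<integral>x. a * (u x * w x / finf x) + b * (v x * w x / finf x) \<partial>lborel)"
    unfolding Hinner_def by (rule Bochner_Integration.integral_cong) (simp_all add: algebra_simps add_divide_distrib)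
  also have "\<dots> = a * Hinner u w + b * Hinner v w"
  proof -
    have i1: "integrable lborel (\<lambda>x. a * (u x * w x / finf x))"
      by (rule integrable_mult_right[OF integrable_Hinner[OF assms(1,3)]])
    have i2: "integrable lborel (\<lambda>x. b * (v x * w x / finf x))"
      by (rule integrable_mult_right[OF integrable_Hinner[OF assms(2,3)]])
    show ?thesis unfolding Hinner_def by (simp only: Bochner_Integration.integral_add[OF i1 i2] integral_mult_right_zero)
  qed
  finally show ?thesis .
qed

lemma Hinner_sym: "Hinner u v = Hinner v u"
  unfolding Hinner_def by (simp add: mult.commute)

lemma Hinner_nonneg: "0 \<le> Hinner u u"
  unfolding Hinner_def using finf_pos by (auto intro!: integral_nonneg_AE AE_I2 divide_nonneg_pos)

lemma Hinner_CS:
  assumes "inH u" "inH v"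
  shows "\<bar>Hinner u v\<bar> \<le> Hnorm u * Hnorm v"
proof -
  define A where "A = Hinner u u"
  define B where "B = Hinner v v"
  define H where "H = Hinner u v"
  have q: "0 \<le> A + 2 * s * H + s^2 * B" for s
  proof -
    have w: "inH (\<lambda>x. 1 * u x + s * v x)" by (rule inH_lin[OF assms])
    have "0 \<le> Hinner (\<lambda>x. 1 * u x + s * v x) (\<lambda>x. 1 * u x + s * v x)" by (rule Hinner_nonneg)
    also have "\<dots> = Hinner u (\<lambda>x. 1 * u x + s * v x) + s * Hinner v (\<lambda>x. 1 * u x + s * v x)"
      using Hinner_lin[OF assms w, of 1 s] by simp
    also have "Hinner u (\<lambda>x. 1 * u x + s * v x) = A + s * H"
      using Hinner_lin[OF assms assms(1), of 1 s] Hinner_sym[of u "\<lambda>x. 1 * u x + s * v x"] Hinner_sym[of v u]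
      by (simp add: A_def H_def)
    also have "Hinner v (\<lambda>x. 1 * u x + s * v x) = H + s * B"
      using Hinner_lin[OF assms assms(2), of 1 s] Hinner_sym[of v "\<lambda>x. 1 * u x + s * v x"]
      by (simp add: B_def H_def)
    finally show ?thesis by (simp add: algebra_simps power2_eq_square)
  qed
  have A0: "0 \<le> A" "0 \<le> B" unfolding A_def B_def by (auto intro: Hinner_nonneg)
  have "H^2 \<le> A * B"
  proof (cases "B > 0")
    case True
    have "0 \<le> A + 2 * (-H/B) * H + (-H/B)^2 * B" by (rule q)
    also have "\<dots> = A - H^2 / B" using True by (simp add: power2_eq_square field_simps)
    finally show ?thesis using True by (simp add: field_simps)
  next
    case False
    then have B: "B = 0" using A0 by simp
    have "H = 0"
    proof (rule ccontr)
      assume "H \<noteq> 0"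
      have "0 \<le> A + 2 * (-(A+1)/(2*H)) * H" using q[of "-(A+1)/(2*H)"] B by simp
      also have "\<dots> = -1" using \<open>H \<noteq> 0\<close> by (simp add: field_simps)
      finally show False by simp
    qed
    then show ?thesis using B by simp
  qed
  then have "\<bar>H\<bar> \<le> sqrt (A * B)"
    using real_sqrt_le_mono[of "H^2" "A*B"] by simp
  then show ?thesis unfolding Hnorm_def A_def B_def H_def by (simp add: real_sqrt_mult)
qed

lemma deriv_Hinner:
  fixes f :: "real \<Rightarrow> real^'d \<Rightarrow> real"
  assumes fH: "\<And>s. s > 0 \<Longrightarrow> inH (f s)" and f'H: "inH f'" and gH: "inH g" and t: "t > 0"
    and lim: "((\<lambda>h. Hnorm (\<lambda>x. (f (t + h) x - f t x) / h - f' x)) \<longlongrightarrow> 0) (at 0)"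
  shows "((\<lambda>s. Hinner (f s) g) has_real_derivative Hinner f' g) (at t)"
proof -
  define u where "u h = (\<lambda>x. (f (t + h) x - f t x) / h - f' x)" for h
  have ev: "eventually (\<lambda>h. norm ((Hinner (f (t + h)) g - Hinner (f t) g) / h - Hinner f' g) \<le> norm (Hnorm (u h)) * Hnorm g) (at 0)"
    unfolding eventually_at
  proof (intro exI[of _ t] conjI ballI impI)
    show "t > 0" by fact
    fix h :: real assume "h \<in> UNIV" and h: "h \<noteq> 0 \<and> dist h 0 < t"
    then have th: "t + h > 0" by auto
    define v1 where "v1 = (\<lambda>x. (1/h) * f (t + h) x + (-1/h) * f t x)"
    have v1H: "inH v1" unfolding v1_def by (rule inH_lin[OF fH[OF th] fH[OF t]])
    have ue: "u h = (\<lambda>x. 1 * v1 x + (-1) * f' x)"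
      by (auto simp: u_def v1_def diff_divide_distrib intro!: ext)
    have uH: "inH (u h)" unfolding ue by (rule inH_lin[OF v1H f'H])
    have L1: "Hinner (\<lambda>x. 1 * v1 x + (-1) * f' x) g = 1 * Hinner v1 g + (-1) * Hinner f' g"
      by (rule Hinner_lin[OF v1H f'H gH])
    have L2: "Hinner v1 g = (1/h) * Hinner (f (t + h)) g + (-1/h) * Hinner (f t) g"
      unfolding v1_def by (rule Hinner_lin[OF fH[OF th] fH[OF t] gH])
    have "Hinner (u h) g = (Hinner (f (t + h)) g - Hinner (f t) g) / h - Hinner f' g"
      unfolding ue L1 L2 by (simp add: diff_divide_distrib)
    moreover have "\<bar>Hinner (u h) g\<bar> \<le> Hnorm (u h) * Hnorm g" by (rule Hinner_CS[OF uH gH])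
    moreover have "0 \<le> Hnorm (u h)" by (simp add: Hnorm_def Hinner_nonneg)
    ultimately show "norm ((Hinner (f (t + h)) g - Hinner (f t) g) / h - Hinner f' g) \<le> norm (Hnorm (u h)) * Hnorm g"
      by simp
  qed
  have "((\<lambda>h. (Hinner (f (t + h)) g - Hinner (f t) g) / h - Hinner f' g) \<longlongrightarrow> 0) (at 0)"
  proof -
    have lim': "((\<lambda>h. Hnorm (u h)) \<longlongrightarrow> 0) (at 0)" using lim by (simp add: u_def)
    show ?thesis using tendsto_0_le[OF lim' ev] .
  qed
  then show ?thesis
    unfolding DERIV_def by (simp add: LIM_zero_iff)
qed


definition prodf :: "('d::finite \<Rightarrow> real \<Rightarrow> real) \<Rightarrow> real^'d \<Rightarrow> real" where
  "prodf U x = (\<Prod>k\<in>UNIV. U k (x$k))"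

lemma prodf_upd: "prodf (U(i := V)) x = V (x$i) * (\<Prod>k\<in>UNIV-{i}. U k (x$k))"
  unfolding prodf_def by (subst prod.remove[of _ i]) (auto intro!: prod.cong)

lemma prodf_split: "prodf U x = U i (x$i) * (\<Prod>k\<in>UNIV-{i}. U k (x$k))"
  using prodf_upd[of U i "U i" x] by simp

lemma line_comp: "(x + s *\<^sub>R axis i 1) $ k = x $ k + (if k = i then s else 0)"
  by (simp add: axis_def)

lemma line_prodf:
  assumes "(U i has_real_derivative D) (at (x$i))"
  shows "((\<lambda>s. prodf U (x + s *\<^sub>R axis i 1)) has_real_derivative D * (\<Prod>k\<in>UNIV-{i}. U k (x$k))) (at 0)"
proof -
  have e: "(\<lambda>s. prodf U (x + s *\<^sub>R axis i 1)) = (\<lambda>s. U i (x$i + s) * (\<Prod>k\<in>UNIV-{i}. U k (x$k)))"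
    by (rule ext, subst prodf_split[of _ _ i]) (auto simp: axis_def intro!: prod.cong)
  have "((\<lambda>s. U i (x$i + s)) has_real_derivative D * 1) (at 0)"
    by (rule DERIV_chain2[where f = "U i"]) (auto intro!: derivative_eq_intros simp: assms)
  then show ?thesis unfolding e by (auto intro!: derivative_eq_intros)
qed

lemma pd_eq: "((\<lambda>s. F (x + s *\<^sub>R axis i 1)) has_real_derivative D) (at 0) \<Longrightarrow> pd i F x = D"
  unfolding pd_def by (rule DERIV_imp_deriv)

lemma pd_prodf:
  assumes "\<And>y. (U i has_real_derivative U' y) (at y)"
  shows "pd i (prodf U) = prodf (U(i := U'))"
proof
  fix x
  show "pd i (prodf U) x = prodf (U(i := U')) x"
    unfolding prodf_upd by (rule pd_eq, rule line_prodf, rule assms)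
qed

lemma Lstar_prodf:
  assumes d1: "\<And>k y. (U k has_real_derivative U1 k y) (at y)"
    and d2: "\<And>k y. (U1 k has_real_derivative U2 k y) (at y)"
  shows "Lstar C (prodf U) x =
     (\<Sum>i\<in>UNIV. \<Sum>j\<in>UNIV. sym_part C $ i $ j * prodf ((U(j := U1 j))(i := (if i = j then U2 j else U1 i))) x)
     - (\<Sum>i\<in>UNIV. (C *v x) $ i * prodf (U(i := U1 i)) x)"
proof -
  have p1: "pd j (prodf U) = prodf (U(j := U1 j))" for j by (rule pd_prodf[OF d1])
  have p2: "pd i (prodf (U(j := U1 j))) = prodf ((U(j := U1 j))(i := (if i = j then U2 j else U1 i)))" for i j
    by (rule pd_prodf) (auto simp: d1 d2)
  show ?thesis unfolding Lstar_def p1 p2 by simp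
qed

lemma prodf_has_derivative:
  assumes "\<And>k y. (U k has_real_derivative V k y) (at y)"
  shows "prodf U differentiable (at x)"
proof -
  have "((\<lambda>x. U k (x$k)) has_derivative (\<lambda>h. V k (x$k) * h$k)) (at x)" for k
  proof -
    have "((\<lambda>x::real^'a. x$k) has_derivative (\<lambda>x. x$k)) (at x)"
      by (rule bounded_linear_imp_has_derivative) (rule bounded_linear_vec_nth)
    moreover have "(U k has_derivative (\<lambda>h. V k (x$k) * h)) (at (x$k))"
      using assms[of k "x$k"] by (simp add: has_field_derivative_def)
    ultimately show ?thesis by (rule has_derivative_compose)
  qed
  then have "((\<lambda>x. \<Prod>k\<in>UNIV. U k (x$k)) has_derivative (\<lambda>y. \<Sum>i\<in>UNIV. V i (x$i) * y$i * (\<Prod>j\<in>UNIV - {i}. U j (x$j)))) (at x)"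
    by (intro has_derivative_prod) auto
  then show ?thesis unfolding prodf_def[abs_def] by (rule differentiableI)
qed

lemma prodf_cont:
  assumes "\<And>k. continuous_on UNIV (W k)"
  shows "continuous_on UNIV (prodf W)"
  unfolding prodf_def[abs_def]
  by (intro continuous_intros continuous_on_compose2[OF assms]) auto

lemma prodf_meas[measurable]:
  assumes "\<And>k. continuous_on UNIV (W k)"
  shows "prodf W \<in> borel_measurable borel"
  by (rule borel_measurable_continuous_onI[OF prodf_cont[OF assms]])

lemma test_fun_prodf:
  assumes d1: "\<And>k y. (U k has_real_derivative U1 k y) (at y)"
    and d2: "\<And>k y. (U1 k has_real_derivative U2 k y) (at y)"
    and c2: "\<And>k. continuous_on UNIV (U2 k)"
    and supp: "\<And>k y. R < \<bar>y\<bar> \<Longrightarrow> U k y = 0"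
  shows "test_fun (prodf U)"
  unfolding test_fun_def
proof (intro conjI allI)
  show "\<exists>R. \<forall>x. R < norm x \<longrightarrow> prodf U x = 0"
  proof (intro exI[of _ "\<bar>R\<bar> * real CARD('a)"] allI impI)
    fix x :: "real^'a" assume x: "\<bar>R\<bar> * real CARD('a) < norm x"
    have "\<exists>k. R < \<bar>x$k\<bar>"
    proof (rule ccontr)
      assume "\<not> (\<exists>k. R < \<bar>x$k\<bar>)"
      then have "\<And>k. \<bar>x$k\<bar> \<le> \<bar>R\<bar>" by (metis abs_ge_self not_le order_trans)
      then have "(\<Sum>k\<in>UNIV. \<bar>x$k\<bar>) \<le> (\<Sum>k\<in>(UNIV::'a set). \<bar>R\<bar>)" by (intro sum_mono) auto
      then show False using norm_le_l1_cart[of x] x by (simp add: mult.commute)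
    qed
    then obtain k where "R < \<bar>x$k\<bar>" by blast
    then show "prodf U x = 0" unfolding prodf_def using supp by (intro prod_zero) auto
  qed
  fix x
  show "prodf U differentiable (at x)" by (rule prodf_has_derivative[OF d1])
  fix i
  have p1: "pd i (prodf U) = prodf (U(i := U1 i))" by (rule pd_prodf[OF d1])
  show "pd i (prodf U) differentiable (at x)"
    unfolding p1 by (rule prodf_has_derivative[where V = "U1(i := U2 i)"]) (auto simp: d1 d2)
next
  fix i j
  have p1: "pd i (prodf U) = prodf (U(i := U1 i))" by (rule pd_prodf[OF d1])
  have p2: "pd j (prodf (U(i := U1 i))) = prodf ((U(i := U1 i))(j := (if j = i then U2 i else U1 j)))"
    by (rule pd_prodf) (auto simp: d1 d2)
  have cU: "continuous_on UNIV (U k)" "continuous_on UNIV (U1 k)" for k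
    using d1 d2 by (auto intro!: continuous_at_imp_continuous_on DERIV_isCont)
  show "continuous_on UNIV (pd j (pd i (prodf U)))"
    unfolding p1 p2 by (rule prodf_cont) (auto simp: cU c2)
qed


lemma Hpoly_prodf: "Hpoly \<alpha> = prodf (\<lambda>k. poly (He (\<alpha> k)))"
  by (rule ext) (simp add: Hpoly_def prodf_def)

lemma Hpoly_split: "Hpoly \<beta> x = poly (He (\<beta> l)) (x$l) * (\<Prod>k\<in>UNIV-{l}. poly (He (\<beta> k)) (x$k))"
  unfolding Hpoly_prodf by (rule prodf_split)

lemma rest_upd: "(\<Prod>k\<in>UNIV-{l}. poly (He ((\<beta>(l := v)) k)) (x$k)) = (\<Prod>k\<in>UNIV-{l}. poly (He (\<beta> k)) (x$k))"
  by (rule prod.cong) auto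

lemma Hpoly_upd: "Hpoly (\<beta>(l := v)) x = poly (He v) (x$l) * (\<Prod>k\<in>UNIV-{l}. poly (He (\<beta> k)) (x$k))"
  using Hpoly_split[of "\<beta>(l := v)" x l] rest_upd[where l=l and \<beta>=\<beta> and v=v and x=x] by simp

lemma line_Hpoly:
  "((\<lambda>s. Hpoly \<beta> (x + s *\<^sub>R axis i 1)) has_real_derivative real (\<beta> i) * Hpoly (mminus \<beta> i) x) (at 0)"
proof -
  have "((\<lambda>s. prodf (\<lambda>k. poly (He (\<beta> k))) (x + s *\<^sub>R axis i 1)) has_real_derivative
      poly (pderiv (He (\<beta> i))) (x$i) * (\<Prod>k\<in>UNIV-{i}. poly (He (\<beta> k)) (x$k))) (at 0)"
    by (rule line_prodf) (rule poly_DERIV)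
  moreover have "poly (pderiv (He (\<beta> i))) (x$i) * (\<Prod>k\<in>UNIV-{i}. poly (He (\<beta> k)) (x$k)) = real (\<beta> i) * Hpoly (mminus \<beta> i) x"
    unfolding mminus_def Hpoly_upd by (simp add: pderiv_He)
  ultimately show ?thesis unfolding Hpoly_prodf by simp
qed

lemma pd_Hpoly: "pd i (Hpoly \<beta>) x = real (\<beta> i) * Hpoly (mminus \<beta> i) x"
  by (rule pd_eq[OF line_Hpoly])

lemma pd_Hpoly_fun: "pd i (Hpoly \<beta>) = (\<lambda>x. real (\<beta> i) * Hpoly (mminus \<beta> i) x)"
  by (rule ext) (rule pd_Hpoly)

lemma pd2_Hpoly: "pd i (pd j (Hpoly \<alpha>)) x = real (\<alpha> j) * (real (mminus \<alpha> j i) * Hpoly (mminus (mminus \<alpha> j) i) x)"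
  unfolding pd_Hpoly_fun
  by (rule pd_eq, rule DERIV_cmult, rule line_Hpoly)

lemma x_Hpoly: "x$l * Hpoly \<beta> x = Hpoly (mplus \<beta> l) x + real (\<beta> l) * Hpoly (mminus \<beta> l) x"
proof -
  let ?r = "(\<Prod>k\<in>UNIV-{l}. poly (He (\<beta> k)) (x$k))"
  have "x$l * Hpoly \<beta> x = (x$l * poly (He (\<beta> l)) (x$l)) * ?r"
    by (simp add: Hpoly_split[of \<beta> x l])
  also have "\<dots> = poly (He (Suc (\<beta> l))) (x$l) * ?r + real (\<beta> l) * (poly (He (\<beta> l - 1)) (x$l) * ?r)"
    by (simp add: poly_x_He algebra_simps)
  also have "\<dots> = Hpoly (mplus \<beta> l) x + real (\<beta> l) * Hpoly (mminus \<beta> l) x"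
    unfolding mplus_def mminus_def Hpoly_upd by simp
  finally show ?thesis .
qed

lemma mminus_comm: "mminus (mminus \<alpha> i) l = mminus (mminus \<alpha> l) i"
  unfolding mminus_def by (cases "i = l") (auto simp: fun_upd_twist)

lemma sym_part_nth: "sym_part C $ i $ j = (C $ i $ j + C $ j $ i) / 2"
  unfolding sym_part_def transpose_def by simp

lemma Lstar_Hpoly:
  "Lstar C (Hpoly \<alpha>) x = - (\<Sum>j\<in>UNIV. \<Sum>l\<in>UNIV. real (\<alpha> j) * C $ j $ l * Hpoly (mplus (mminus \<alpha> j) l) x)"
proof -
  define T where "T i l = real (\<alpha> i) * real (mminus \<alpha> i l) * Hpoly (mminus (mminus \<alpha> i) l) x" for i l
  have Tsym: "T i l = T l i" for i l
    unfolding T_def by (cases "i = l") (auto simp: mminus_def fun_upd_twist)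
  have first: "(\<Sum>i\<in>UNIV. \<Sum>j\<in>UNIV. sym_part C $ i $ j * pd i (pd j (Hpoly \<alpha>)) x)
      = (\<Sum>i\<in>UNIV. \<Sum>l\<in>UNIV. C $ i $ l * T i l)"
  proof -
    have "(\<Sum>i\<in>UNIV. \<Sum>j\<in>UNIV. sym_part C $ i $ j * pd i (pd j (Hpoly \<alpha>)) x)
        = (\<Sum>i\<in>UNIV. \<Sum>j\<in>UNIV. (C $ i $ j + C $ j $ i) / 2 * T i j)"
      unfolding pd2_Hpoly sym_part_nth by (intro sum.cong refl) (subst Tsym, simp add: T_def mult_ac)
    also have "\<dots> = (\<Sum>i\<in>UNIV. \<Sum>j\<in>UNIV. C $ i $ j * T i j) / 2 + (\<Sum>i\<in>UNIV. \<Sum>j\<in>UNIV. C $ j $ i * T i j) / 2"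
      by (simp add: sum_divide_distrib sum.distrib[symmetric] add_divide_distrib algebra_simps)
    also have "(\<Sum>i\<in>UNIV. \<Sum>j\<in>UNIV. C $ j $ i * T i j) = (\<Sum>i\<in>UNIV. \<Sum>j\<in>UNIV. C $ i $ j * T i j)"
      by (subst sum.swap) (simp add: Tsym)
    finally show ?thesis by simp
  qed
  have second: "(\<Sum>i\<in>UNIV. (C *v x) $ i * pd i (Hpoly \<alpha>) x)
      = (\<Sum>i\<in>UNIV. \<Sum>l\<in>UNIV. real (\<alpha> i) * C $ i $ l * Hpoly (mplus (mminus \<alpha> i) l) x)
        + (\<Sum>i\<in>UNIV. \<Sum>l\<in>UNIV. C $ i $ l * T i l)"
  proof -
    have "(\<Sum>i\<in>UNIV. (C *v x) $ i * pd i (Hpoly \<alpha>) x)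
        = (\<Sum>i\<in>UNIV. \<Sum>l\<in>UNIV. C $ i $ l * real (\<alpha> i) * (x $ l * Hpoly (mminus \<alpha> i) x))"
      unfolding pd_Hpoly by (simp add: matrix_vector_mult_def sum_distrib_left sum_distrib_right mult_ac)
    also have "\<dots> = (\<Sum>i\<in>UNIV. \<Sum>l\<in>UNIV. real (\<alpha> i) * C $ i $ l * Hpoly (mplus (mminus \<alpha> i) l) x + C $ i $ l * T i l)"
      unfolding x_Hpoly T_def by (simp add: algebra_simps)
    finally show ?thesis by (simp add: sum.distrib)
  qed
  show ?thesis unfolding Lstar_def first second by simp
qed


definition mp :: "real \<Rightarrow> real" where "mp s = max 0 s"

lemma mp_pow_deriv:
  assumes "n \<ge> 1"
  shows "((\<lambda>s. mp s ^ Suc n) has_real_derivative real (Suc n) * mp s ^ n) (at s)"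
proof (cases "s = 0")
  case True
  have lim: "((\<lambda>h. mp h ^ n) \<longlongrightarrow> 0) (at 0)"
  proof -
    have "isCont (\<lambda>h. mp h ^ n) 0" unfolding mp_def by (intro continuous_intros)
    then have "((\<lambda>h. mp h ^ n) \<longlongrightarrow> mp 0 ^ n) (at 0)" unfolding isCont_def .
    moreover have "mp 0 ^ n = 0" using assms by (simp add: mp_def)
    ultimately show ?thesis by simp
  qed
  have ev: "eventually (\<lambda>h. norm ((mp h ^ Suc n - mp 0 ^ Suc n) / h) \<le> norm (mp h ^ n) * 1) (at 0)"
  proof (intro always_eventually allI)
    fix h :: real
    have "\<bar>mp h\<bar> \<le> \<bar>h\<bar>" by (simp add: mp_def)
    then have "\<bar>mp h\<bar> ^ n * \<bar>mp h\<bar> \<le> \<bar>mp h\<bar> ^ n * \<bar>h\<bar>" by (simp add: mult_left_mono)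
    then show "norm ((mp h ^ Suc n - mp 0 ^ Suc n) / h) \<le> norm (mp h ^ n) * 1"
      by (cases "h = 0") (auto simp: mp_def abs_mult power_abs divide_simps mult_ac)
  qed
  have "((\<lambda>h. (mp (0 + h) ^ Suc n - mp 0 ^ Suc n) / h) \<longlongrightarrow> 0) (at 0)"
    using tendsto_0_le[OF lim ev] by simp
  moreover have "0 < n" using assms by simp
  ultimately show ?thesis using True unfolding DERIV_def by (simp add: mp_def zero_power)
next
  case False
  show ?thesis
  proof (cases "s > 0")
    case True
    have d: "((\<lambda>s. s ^ Suc n) has_real_derivative real (Suc n) * s ^ n) (at s)"
      using DERIV_pow[of "Suc n" s] by simp
    have "((\<lambda>s. mp s ^ Suc n) has_real_derivative real (Suc n) * s ^ n) (at s)"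
    proof (rule has_field_derivative_transform_within_open[OF d, where S="{0<..}"])
      show "open {0::real<..}" by simp
      show "s \<in> {0<..}" using True by simp
      fix x :: real assume "x \<in> {0<..}" then show "x ^ Suc n = mp x ^ Suc n" by (simp add: mp_def)
    qed
    moreover have "mp s = s" using True by (simp add: mp_def)
    ultimately show ?thesis by simp
  next
    case False
    then have s: "s < 0" using \<open>s \<noteq> 0\<close> by simp
    have d: "((\<lambda>s. 0) has_real_derivative 0) (at s)" by simp
    have "((\<lambda>s. mp s ^ Suc n) has_real_derivative 0) (at s)"
    proof (rule has_field_derivative_transform_within_open[OF d, where S="{..<0}"])
      show "open {..<0::real}" by simp
      show "s \<in> {..<0}" using s by simp
      fix x :: real assume "x \<in> {..<0}" then show "0 = mp x ^ Suc n" by (simp add: mp_def)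
    qed
    moreover have "mp s = 0" using s by (simp add: mp_def)
    moreover have "0 < n" using assms by simp
    ultimately show ?thesis by (simp add: zero_power)
  qed
qed

definition psi :: "real \<Rightarrow> real" where "psi y = mp (1 - y^2) ^ 3"
definition psi1 :: "real \<Rightarrow> real" where "psi1 y = -6 * y * mp (1 - y^2) ^ 2"
definition psi2 :: "real \<Rightarrow> real" where "psi2 y = -6 * mp (1 - y^2) ^ 2 + 24 * y^2 * mp (1 - y^2)"

lemma psi_deriv: "(psi has_real_derivative psi1 y) (at y)"
proof -
  have "((\<lambda>y. mp (1 - y^2) ^ Suc 2) has_real_derivative (real (Suc 2) * mp (1 - y^2) ^ 2) * (- (2 * y))) (at y)"
    by (rule DERIV_chain2[OF mp_pow_deriv]) (auto intro!: derivative_eq_intros)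
  moreover have "Suc 2 = 3" by simp
  ultimately have "((\<lambda>y. mp (1 - y^2) ^ 3) has_real_derivative (3 * mp (1 - y^2) ^ 2) * (- (2 * y))) (at y)"
    by simp
  moreover have "(3 * mp (1 - y^2) ^ 2) * (- (2 * y)) = psi1 y" unfolding psi1_def by simp
  ultimately show ?thesis unfolding psi_def[abs_def] by simp
qed

lemma psi1_deriv: "(psi1 has_real_derivative psi2 y) (at y)"
proof -
  have "((\<lambda>y. mp (1 - y^2) ^ Suc 1) has_real_derivative (real (Suc 1) * mp (1 - y^2) ^ 1) * (- (2 * y))) (at y)"
    by (rule DERIV_chain2[OF mp_pow_deriv]) (auto intro!: derivative_eq_intros)
  then have d: "((\<lambda>y. mp (1 - y^2) ^ 2) has_real_derivative 2 * mp (1 - y^2) * (- (2 * y))) (at y)"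
    by (simp add: numeral_2_eq_2)
  have "((\<lambda>y. (-6 * y) * mp (1 - y^2) ^ 2) has_real_derivative
      -6 * mp (1 - y^2) ^ 2 + (-6 * y) * (2 * mp (1 - y^2) * (- (2 * y)))) (at y)"
    by (rule derivative_eq_intros d refl)+ simp
  moreover have "-6 * mp (1 - y^2) ^ 2 + (-6 * y) * (2 * mp (1 - y^2) * (- (2 * y))) = psi2 y"
    unfolding psi2_def by (simp add: power2_eq_square)
  ultimately show ?thesis unfolding psi1_def[abs_def] by simp
qed

lemma psi_cont: "continuous_on UNIV psi" "continuous_on UNIV psi1" "continuous_on UNIV psi2"
  unfolding psi_def[abs_def] psi1_def[abs_def] psi2_def[abs_def] mp_def by (intro continuous_intros)+

lemma mp_bounds: "0 \<le> mp (1 - y^2)" "mp (1 - y^2) \<le> 1" "mp (1 - y^2) \<noteq> 0 \<Longrightarrow> \<bar>y\<bar> \<le> 1"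
proof -
  show "0 \<le> mp (1 - y^2)" "mp (1 - y^2) \<le> 1" by (auto simp: mp_def)
  show "mp (1 - y^2) \<noteq> 0 \<Longrightarrow> \<bar>y\<bar> \<le> 1"
  proof -
    assume "mp (1 - y^2) \<noteq> 0"
    then have "y^2 \<le> 1" by (simp add: mp_def max_def split: if_splits)
    then show ?thesis by (simp add: abs_square_le_1)
  qed
qed

lemma psi_bounds: "\<bar>psi y\<bar> \<le> 1" "\<bar>psi1 y\<bar> \<le> 6" "\<bar>psi2 y\<bar> \<le> 30"
proof -
  have m0: "0 \<le> mp (1 - y^2)" and m1: "mp (1 - y^2) \<le> 1" by (rule mp_bounds)+
  show "\<bar>psi y\<bar> \<le> 1" unfolding psi_def using m0 m1 by (simp add: power_le_one)
  show "\<bar>psi1 y\<bar> \<le> 6"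
  proof (cases "mp (1 - y^2) = 0")
    case False
    then have y: "\<bar>y\<bar> \<le> 1" by (rule mp_bounds)
    have "\<bar>y\<bar> * mp (1 - y^2) ^ 2 \<le> 1 * 1" using y m0 m1 by (intro mult_mono) (auto simp: power_le_one)
    then show ?thesis unfolding psi1_def by (simp add: abs_mult)
  qed (simp add: psi1_def)
  show "\<bar>psi2 y\<bar> \<le> 30"
  proof (cases "mp (1 - y^2) = 0")
    case False
    then have y: "\<bar>y\<bar> \<le> 1" by (rule mp_bounds)
    then have y2: "y^2 \<le> 1" by (simp add: abs_square_le_1)
    have a: "mp (1 - y^2) ^ 2 \<le> 1" using m0 m1 by (simp add: power_le_one)
    have b: "y^2 * mp (1 - y^2) \<le> 1 * 1" using y2 m0 m1 by (intro mult_mono) auto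
    have n1: "0 \<le> y^2 * mp (1 - y^2)" "0 \<le> mp (1 - y^2) ^ 2" using m0 by simp_all
    have "\<bar>psi2 y\<bar> \<le> 6 * mp (1 - y^2) ^ 2 + 24 * (y^2 * mp (1 - y^2))"
      unfolding psi2_def using n1 by (simp only: abs_le_iff) linarith
    then show ?thesis using a b by simp
  qed (simp add: psi2_def)
qed

lemma psi_0: "psi 0 = 1" "psi1 0 = 0"
  by (simp_all add: psi_def psi1_def mp_def)

lemma psi_supp: assumes "1 < \<bar>y\<bar>" shows "psi y = 0"
proof -
  have "1 < \<bar>y\<bar>^2" using assms by (rule one_less_power) simp
  then have "1 - y^2 < 0" by simp
  then show ?thesis unfolding psi_def mp_def by simp
qed

lemma psi_isCont: "isCont psi x" "isCont psi1 x" "isCont psi2 x"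
  using psi_cont continuous_on_eq_continuous_at[of UNIV] by auto

lemma psi_comp_cont[continuous_intros]:
  "continuous_on S f \<Longrightarrow> continuous_on S (\<lambda>x. psi (f x))"
  by (rule continuous_on_compose2[OF psi_cont(1)]) auto

lemma psi1_comp_cont[continuous_intros]:
  "continuous_on S f \<Longrightarrow> continuous_on S (\<lambda>x. psi1 (f x))"
  by (rule continuous_on_compose2[OF psi_cont(2)]) auto

lemma psi2_comp_cont[continuous_intros]:
  "continuous_on S f \<Longrightarrow> continuous_on S (\<lambda>x. psi2 (f x))"
  by (rule continuous_on_compose2[OF psi_cont(3)]) auto

definition rr :: "nat \<Rightarrow> real" where "rr n = real (Suc n)"

lemma rr_ge1: "rr n \<ge> 1" by (simp add: rr_def)

lemma rr_nz[simp]: "rr n \<noteq> 0" using rr_ge1[of n] by auto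

lemma psiR_deriv:
  assumes "r > 0"
  shows "((\<lambda>y. psi (y / r)) has_real_derivative psi1 (y / r) / r) (at y)"
        "((\<lambda>y. psi1 (y / r)) has_real_derivative psi2 (y / r) / r) (at y)"
proof -
  have d: "((\<lambda>y. y / r) has_real_derivative 1 / r) (at y)"
    using assms by (auto intro!: derivative_eq_intros)
  show "((\<lambda>y. psi (y / r)) has_real_derivative psi1 (y / r) / r) (at y)"
    using DERIV_chain2[OF psi_deriv d] by simp
  show "((\<lambda>y. psi1 (y / r)) has_real_derivative psi2 (y / r) / r) (at y)"
    using DERIV_chain2[OF psi1_deriv d] by simp
qed

definition uu :: "('d \<Rightarrow> nat) \<Rightarrow> nat \<Rightarrow> 'd \<Rightarrow> real \<Rightarrow> real" where
  "uu \<alpha> n k y = poly (He (\<alpha> k)) y * psi (y / rr n)"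
definition uu1 :: "('d \<Rightarrow> nat) \<Rightarrow> nat \<Rightarrow> 'd \<Rightarrow> real \<Rightarrow> real" where
  "uu1 \<alpha> n k y = poly (pderiv (He (\<alpha> k))) y * psi (y / rr n) + poly (He (\<alpha> k)) y * (psi1 (y / rr n) / rr n)"
definition uu2 :: "('d \<Rightarrow> nat) \<Rightarrow> nat \<Rightarrow> 'd \<Rightarrow> real \<Rightarrow> real" where
  "uu2 \<alpha> n k y = poly (pderiv (pderiv (He (\<alpha> k)))) y * psi (y / rr n)
     + 2 * (poly (pderiv (He (\<alpha> k))) y * (psi1 (y / rr n) / rr n))
     + poly (He (\<alpha> k)) y * (psi2 (y / rr n) / rr n / rr n)"

lemma uu_deriv: "(uu \<alpha> n k has_real_derivative uu1 \<alpha> n k y) (at y)"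
proof -
  have r: "rr n > 0" using rr_ge1[of n] by simp
  have "((\<lambda>y. poly (He (\<alpha> k)) y * psi (y / rr n)) has_real_derivative
      poly (He (\<alpha> k)) y * (psi1 (y / rr n) / rr n) + poly (pderiv (He (\<alpha> k))) y * psi (y / rr n)) (at y)"
    by (rule DERIV_mult'[OF poly_DERIV psiR_deriv(1)[OF r]])
  then show ?thesis unfolding uu_def[abs_def] uu1_def by (simp add: algebra_simps)
qed

lemma uu1_deriv: "(uu1 \<alpha> n k has_real_derivative uu2 \<alpha> n k y) (at y)"
proof -
  have r: "rr n > 0" using rr_ge1[of n] by simp
  have d1: "((\<lambda>y. psi1 (y / rr n) / rr n) has_real_derivative psi2 (y / rr n) / rr n / rr n) (at y)"
    using DERIV_cdivide[OF psiR_deriv(2)[OF r], of "rr n"] by simp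
  have "((\<lambda>y. poly (pderiv (He (\<alpha> k))) y * psi (y / rr n) + poly (He (\<alpha> k)) y * (psi1 (y / rr n) / rr n)) has_real_derivative
      (poly (pderiv (He (\<alpha> k))) y * (psi1 (y / rr n) / rr n) + poly (pderiv (pderiv (He (\<alpha> k)))) y * psi (y / rr n))
      + (poly (He (\<alpha> k)) y * (psi2 (y / rr n) / rr n / rr n) + poly (pderiv (He (\<alpha> k))) y * (psi1 (y / rr n) / rr n))) (at y)"
    by (rule DERIV_add[OF DERIV_mult'[OF poly_DERIV psiR_deriv(1)[OF r]] DERIV_mult'[OF poly_DERIV d1]])
  then show ?thesis unfolding uu1_def[abs_def] uu2_def by (simp add: algebra_simps)
qed

lemma uu_cont: "continuous_on UNIV (uu \<alpha> n k)" "continuous_on UNIV (uu1 \<alpha> n k)" "continuous_on UNIV (uu2 \<alpha> n k)"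
  unfolding uu_def[abs_def] uu1_def[abs_def] uu2_def[abs_def] by (auto intro!: continuous_intros)

lemma uu_supp: "rr n < \<bar>y\<bar> \<Longrightarrow> uu \<alpha> n k y = 0"
proof -
  assume a: "rr n < \<bar>y\<bar>"
  have r: "0 < rr n" using rr_ge1[of n] by linarith
  have "1 < \<bar>y\<bar> / rr n" using a r by (simp only: less_divide_eq_1_pos)
  then have "1 < \<bar>y / rr n\<bar>" by (simp only: abs_div_pos[OF r])
  then show ?thesis unfolding uu_def by (simp add: psi_supp)
qed

lemma test_fun_uu: "test_fun (prodf (uu \<alpha> n))"
  by (rule test_fun_prodf[OF uu_deriv uu1_deriv uu_cont(3) uu_supp])

lemma inv_rr_lim: "(\<lambda>n. y / rr n) \<longlonglongrightarrow> 0" "(\<lambda>n. 1 / rr n) \<longlonglongrightarrow> 0"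
proof -
  have "(\<lambda>n. inverse (real (Suc n))) \<longlonglongrightarrow> 0" by (rule LIMSEQ_inverse_real_of_nat)
  then have l: "(\<lambda>n. 1 / rr n) \<longlonglongrightarrow> 0" by (simp add: rr_def divide_inverse)
  then show "(\<lambda>n. 1 / rr n) \<longlonglongrightarrow> 0" .
  show "(\<lambda>n. y / rr n) \<longlonglongrightarrow> 0" using tendsto_mult[OF tendsto_const[of y] l] by simp
qed

lemma uu_lim:
  "(\<lambda>n. uu \<alpha> n k y) \<longlonglongrightarrow> poly (He (\<alpha> k)) y"
  "(\<lambda>n. uu1 \<alpha> n k y) \<longlonglongrightarrow> poly (pderiv (He (\<alpha> k))) y"
  "(\<lambda>n. uu2 \<alpha> n k y) \<longlonglongrightarrow> poly (pderiv (pderiv (He (\<alpha> k)))) y"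
proof -
  have p0: "(\<lambda>n. psi (y / rr n)) \<longlonglongrightarrow> 1"
    using isCont_tendsto_compose[OF psi_isCont(1) inv_rr_lim(1)] psi_0 by simp
  have p1: "(\<lambda>n. psi1 (y / rr n) / rr n) \<longlonglongrightarrow> 0"
    using tendsto_mult[OF isCont_tendsto_compose[OF psi_isCont(2) inv_rr_lim(1)] inv_rr_lim(2)] by simp
  have p2: "(\<lambda>n. psi2 (y / rr n) / rr n / rr n) \<longlonglongrightarrow> 0"
    using tendsto_mult[OF tendsto_mult[OF isCont_tendsto_compose[OF psi_isCont(3) inv_rr_lim(1)] inv_rr_lim(2)] inv_rr_lim(2)]
    by simp
  show "(\<lambda>n. uu \<alpha> n k y) \<longlonglongrightarrow> poly (He (\<alpha> k)) y"
    unfolding uu_def using tendsto_mult[OF tendsto_const p0] by simp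
  show "(\<lambda>n. uu1 \<alpha> n k y) \<longlonglongrightarrow> poly (pderiv (He (\<alpha> k))) y"
    unfolding uu1_def using tendsto_add[OF tendsto_mult[OF tendsto_const p0] tendsto_mult[OF tendsto_const p1]] by simp
  show "(\<lambda>n. uu2 \<alpha> n k y) \<longlonglongrightarrow> poly (pderiv (pderiv (He (\<alpha> k)))) y"
    unfolding uu2_def
    using tendsto_add[OF tendsto_add[OF tendsto_mult[OF tendsto_const p0] tendsto_mult[OF tendsto_const tendsto_mult[OF tendsto_const p1]]]
        tendsto_mult[OF tendsto_const p2]] by simp
qed

definition ee :: "('d \<Rightarrow> nat) \<Rightarrow> 'd \<Rightarrow> real \<Rightarrow> real" where
  "ee \<alpha> k y = 30 * (1 + \<bar>y\<bar>) * (\<bar>poly (He (\<alpha> k)) y\<bar> + 2 * \<bar>poly (pderiv (He (\<alpha> k))) y\<bar> + \<bar>poly (pderiv (pderiv (He (\<alpha> k)))) y\<bar>)"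

lemma div_le_self_ge1: fixes a r :: real assumes "0 \<le> a" "1 \<le> r" shows "a / r \<le> a"
proof -
  have "a / r \<le> a / 1" by (rule divide_left_mono) (use assms in auto)
  then show ?thesis by simp
qed

lemma uu_bounds:
  "(1 + \<bar>y\<bar>) * \<bar>uu \<alpha> n k y\<bar> \<le> ee \<alpha> k y"
  "(1 + \<bar>y\<bar>) * \<bar>uu1 \<alpha> n k y\<bar> \<le> ee \<alpha> k y"
  "(1 + \<bar>y\<bar>) * \<bar>uu2 \<alpha> n k y\<bar> \<le> ee \<alpha> k y"
proof -
  define a where "a = \<bar>poly (He (\<alpha> k)) y\<bar>"
  define b where "b = \<bar>poly (pderiv (He (\<alpha> k))) y\<bar>"
  define c where "c = \<bar>poly (pderiv (pderiv (He (\<alpha> k)))) y\<bar>"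
  have abc: "0 \<le> a" "0 \<le> b" "0 \<le> c" by (simp_all add: a_def b_def c_def)
  have r1: "rr n \<ge> 1" by (rule rr_ge1)
  have rpos: "rr n > 0" using r1 by linarith
  have q0: "\<bar>psi (y / rr n)\<bar> \<le> 1" by (rule psi_bounds)
  have q1: "\<bar>psi1 (y / rr n) / rr n\<bar> \<le> 6"
  proof -
    have "\<bar>psi1 (y / rr n) / rr n\<bar> = \<bar>psi1 (y / rr n)\<bar> / rr n"
      using r1 by (simp only: abs_divide abs_of_pos[OF rpos])
    also have "\<dots> \<le> \<bar>psi1 (y / rr n)\<bar>" by (rule div_le_self_ge1[OF abs_ge_zero r1])
    also have "\<dots> \<le> 6" by (rule psi_bounds)
    finally show ?thesis .
  qed
  have q2: "\<bar>psi2 (y / rr n) / rr n / rr n\<bar> \<le> 30"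
  proof -
    have "\<bar>psi2 (y / rr n) / rr n / rr n\<bar> = \<bar>psi2 (y / rr n)\<bar> / rr n / rr n"
      using r1 by (simp only: abs_divide abs_of_pos[OF rpos])
    also have "\<dots> \<le> \<bar>psi2 (y / rr n)\<bar> / rr n"
      by (rule div_le_self_ge1[OF _ r1]) (use rpos in simp)
    also have "\<dots> \<le> \<bar>psi2 (y / rr n)\<bar>" by (rule div_le_self_ge1[OF abs_ge_zero r1])
    also have "\<dots> \<le> 30" by (rule psi_bounds)
    finally show ?thesis .
  qed
  have m: "\<bar>P * Q\<bar> \<le> \<bar>P\<bar> * B" if "\<bar>Q\<bar> \<le> B" for P Q B :: real
    using that by (simp add: abs_mult mult_left_mono)
  have b0: "\<bar>uu \<alpha> n k y\<bar> \<le> 30 * (a + 2 * b + c)"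
  proof -
    have "\<bar>uu \<alpha> n k y\<bar> \<le> a * 1" unfolding uu_def a_def by (rule m[OF q0])
    then show ?thesis using abc by (simp only: mult_1_right) (smt (verit))
  qed
  have b1: "\<bar>uu1 \<alpha> n k y\<bar> \<le> 30 * (a + 2 * b + c)"
  proof -
    have "\<bar>uu1 \<alpha> n k y\<bar> \<le> b * 1 + a * 6" unfolding uu1_def a_def b_def
      by (rule order_trans[OF abs_triangle_ineq add_mono[OF m[OF q0] m[OF q1]]])
    then show ?thesis using abc by (simp only: mult_1_right) (smt (verit))
  qed
  have b2: "\<bar>uu2 \<alpha> n k y\<bar> \<le> 30 * (a + 2 * b + c)"
  proof -
    have t: "\<bar>2 * (poly (pderiv (He (\<alpha> k))) y * (psi1 (y / rr n) / rr n))\<bar> \<le> 2 * (b * 6)"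
      using m[OF q1, of "poly (pderiv (He (\<alpha> k))) y"] by (simp add: abs_mult b_def)
    have t0: "\<bar>poly (pderiv (pderiv (He (\<alpha> k)))) y * psi (y / rr n)\<bar> \<le> c * 1"
      using m[OF q0] by (simp add: c_def)
    have t2: "\<bar>poly (He (\<alpha> k)) y * (psi2 (y / rr n) / rr n / rr n)\<bar> \<le> a * 30"
      using m[OF q2] by (simp add: a_def)
    have "\<bar>uu2 \<alpha> n k y\<bar> \<le> c * 1 + 2 * (b * 6) + a * 30" unfolding uu2_def
      by (rule order_trans[OF abs_triangle_ineq add_mono[OF order_trans[OF abs_triangle_ineq add_mono[OF t0 t]] t2]])
    then show ?thesis using abc by (simp only: mult_1_right) (smt (verit))
  qed
  have y0: "0 \<le> 1 + \<bar>y\<bar>" by simp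
  have ee: "ee \<alpha> k y = (1 + \<bar>y\<bar>) * (30 * (a + 2 * b + c))"
    unfolding ee_def a_def b_def c_def by (simp only: mult.assoc)
  show "(1 + \<bar>y\<bar>) * \<bar>uu \<alpha> n k y\<bar> \<le> ee \<alpha> k y"
    unfolding ee by (rule mult_left_mono[OF b0 y0])
  show "(1 + \<bar>y\<bar>) * \<bar>uu1 \<alpha> n k y\<bar> \<le> ee \<alpha> k y"
    unfolding ee by (rule mult_left_mono[OF b1 y0])
  show "(1 + \<bar>y\<bar>) * \<bar>uu2 \<alpha> n k y\<bar> \<le> ee \<alpha> k y"
    unfolding ee by (rule mult_left_mono[OF b2 y0])
qed


definition LF :: "real^'d^'d \<Rightarrow> ('d \<Rightarrow> real \<Rightarrow> real) \<Rightarrow> ('d \<Rightarrow> real \<Rightarrow> real) \<Rightarrow> ('d \<Rightarrow> real \<Rightarrow> real) \<Rightarrow> real^'d \<Rightarrow> real" where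
  "LF C U U1 U2 x =
     (\<Sum>i\<in>UNIV. \<Sum>j\<in>UNIV. sym_part C $ i $ j * prodf ((U(j := U1 j))(i := (if i = j then U2 j else U1 i))) x)
     - (\<Sum>i\<in>UNIV. (C *v x) $ i * prodf (U(i := U1 i)) x)"

lemma Lstar_LF:
  assumes "\<And>k y. (U k has_real_derivative U1 k y) (at y)"
    and "\<And>k y. (U1 k has_real_derivative U2 k y) (at y)"
  shows "Lstar C (prodf U) = LF C U U1 U2"
  by (rule ext) (simp add: LF_def Lstar_prodf[OF assms])

lemma Cv_sum: "(C *v x) $ i = (\<Sum>l\<in>UNIV. C $ i $ l * x $ l)"
  by (simp add: matrix_vector_mult_def)

lemma prodf_lim:
  assumes "\<And>k. (\<lambda>n. W n k (x$k)) \<longlonglongrightarrow> Lm k (x$k)"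
  shows "(\<lambda>n. prodf (W n) x) \<longlonglongrightarrow> prodf Lm x"
  unfolding prodf_def by (rule tendsto_prod) (rule assms)

lemma LF_lim:
  assumes l0: "\<And>k y. (\<lambda>n. U n k y) \<longlonglongrightarrow> L k y"
    and l1: "\<And>k y. (\<lambda>n. U1 n k y) \<longlonglongrightarrow> L1 k y"
    and l2: "\<And>k y. (\<lambda>n. U2 n k y) \<longlonglongrightarrow> L2 k y"
  shows "(\<lambda>n. LF C (U n) (U1 n) (U2 n) x) \<longlonglongrightarrow> LF C L L1 L2 x"
proof -
  have a: "(\<lambda>n. prodf (((U n)(j := U1 n j))(i := (if i = j then U2 n j else U1 n i))) x)
      \<longlonglongrightarrow> prodf ((L(j := L1 j))(i := (if i = j then L2 j else L1 i))) x" for i j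
    by (rule prodf_lim) (auto simp: l0 l1 l2)
  have b: "(\<lambda>n. prodf ((U n)(i := U1 n i)) x) \<longlonglongrightarrow> prodf (L(i := L1 i)) x" for i
    by (rule prodf_lim) (auto simp: l0 l1)
  show ?thesis unfolding LF_def
    by (intro tendsto_diff tendsto_sum tendsto_mult tendsto_const a b)
qed

lemma prodf_bound:
  assumes "\<And>k y. \<bar>W k y\<bar> \<le> e k y"
  shows "\<bar>prodf W x\<bar> \<le> prodf e x"
  unfolding prodf_def abs_prod by (rule prod_mono) (use assms in auto)

lemma prodf_bound_x:
  assumes "\<And>k y. \<bar>W k y\<bar> \<le> e k y" and "\<And>y. \<bar>y\<bar> * \<bar>W l y\<bar> \<le> e l y"
  shows "\<bar>x$l * prodf W x\<bar> \<le> prodf e x"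
proof -
  have "\<bar>x$l * prodf W x\<bar> = (\<bar>x$l\<bar> * \<bar>W l (x$l)\<bar>) * \<bar>\<Prod>k\<in>UNIV-{l}. W k (x$k)\<bar>"
    by (simp add: prodf_split[of W x l] abs_mult)
  also have "\<dots> \<le> e l (x$l) * (\<Prod>k\<in>UNIV-{l}. e k (x$k))"
  proof (rule mult_mono)
    show "\<bar>x$l\<bar> * \<bar>W l (x$l)\<bar> \<le> e l (x$l)" by (rule assms(2))
    show "\<bar>\<Prod>k\<in>UNIV-{l}. W k (x$k)\<bar> \<le> (\<Prod>k\<in>UNIV-{l}. e k (x$k))"
      unfolding abs_prod by (rule prod_mono) (use assms(1) in auto)
    show "0 \<le> e l (x$l)" using assms(1)[of l "x$l"] by linarith
    show "0 \<le> \<bar>\<Prod>k\<in>UNIV-{l}. W k (x$k)\<bar>" by simp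
  qed
  also have "\<dots> = prodf e x" by (simp add: prodf_split[of e x l])
  finally show ?thesis .
qed

definition KC :: "real^'d^'d \<Rightarrow> real" where
  "KC C = (\<Sum>i\<in>UNIV. \<Sum>j\<in>UNIV. \<bar>sym_part C $ i $ j\<bar>) + (\<Sum>i\<in>UNIV. \<Sum>l\<in>UNIV. \<bar>C $ i $ l\<bar>)"

definition good :: "('d \<Rightarrow> real \<Rightarrow> real) \<Rightarrow> ('d \<Rightarrow> real \<Rightarrow> real) \<Rightarrow> bool" where
  "good e W \<longleftrightarrow> (\<forall>k y. (1 + \<bar>y\<bar>) * \<bar>W k y\<bar> \<le> e k y)"

lemma good_D: assumes "good e W" shows "\<bar>W k y\<bar> \<le> e k y" "\<bar>y\<bar> * \<bar>W k y\<bar> \<le> e k y"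
proof -
  have h: "(1 + \<bar>y\<bar>) * \<bar>W k y\<bar> \<le> e k y" using assms by (simp add: good_def)
  have d: "(1 + \<bar>y\<bar>) * \<bar>W k y\<bar> = \<bar>W k y\<bar> + \<bar>y\<bar> * \<bar>W k y\<bar>" by (simp add: distrib_right)
  have n1: "0 \<le> \<bar>y\<bar> * \<bar>W k y\<bar>" by simp
  have n2: "0 \<le> \<bar>W k y\<bar>" by simp
  show "\<bar>W k y\<bar> \<le> e k y" using h d n1 by linarith
  show "\<bar>y\<bar> * \<bar>W k y\<bar> \<le> e k y" using h d n2 by linarith
qed

lemma LF_bound:
  assumes g0: "\<And>i j. good e ((U(j := U1 j))(i := (if i = j then U2 j else U1 i)))"
    and g1: "\<And>i. good e (U(i := U1 i))"
  shows "\<bar>LF C U U1 U2 x\<bar> \<le> KC C * prodf e x"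
proof -
  have gb0: "\<bar>prodf ((U(j := U1 j))(i := (if i = j then U2 j else U1 i))) x\<bar> \<le> prodf e x" for i j
    by (rule prodf_bound[OF good_D(1)[OF g0]])
  have gb1: "\<bar>x$l * prodf (U(i := U1 i)) x\<bar> \<le> prodf e x" for i l
    by (rule prodf_bound_x[OF good_D(1)[OF g1] good_D(2)[OF g1]])
  have A: "\<bar>\<Sum>i\<in>UNIV. \<Sum>j\<in>UNIV. sym_part C $ i $ j * prodf ((U(j := U1 j))(i := (if i = j then U2 j else U1 i))) x\<bar>
      \<le> (\<Sum>i\<in>UNIV. \<Sum>j\<in>UNIV. \<bar>sym_part C $ i $ j\<bar> * prodf e x)"
  proof (rule order_trans[OF sum_abs], rule sum_mono, rule order_trans[OF sum_abs], rule sum_mono)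
    fix i j
    show "\<bar>sym_part C $ i $ j * prodf ((U(j := U1 j))(i := (if i = j then U2 j else U1 i))) x\<bar> \<le> \<bar>sym_part C $ i $ j\<bar> * prodf e x"
      unfolding abs_mult by (rule mult_left_mono[OF gb0]) simp
  qed
  have B: "\<bar>\<Sum>i\<in>UNIV. (C *v x) $ i * prodf (U(i := U1 i)) x\<bar> \<le> (\<Sum>i\<in>UNIV. \<Sum>l\<in>UNIV. \<bar>C $ i $ l\<bar> * prodf e x)"
    unfolding Cv_sum sum_distrib_right
  proof (rule order_trans[OF sum_abs], rule sum_mono, rule order_trans[OF sum_abs], rule sum_mono)
    fix i l
    show "\<bar>C $ i $ l * x $ l * prodf (U(i := U1 i)) x\<bar> \<le> \<bar>C $ i $ l\<bar> * prodf e x"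
      unfolding mult.assoc abs_mult[of "C $ i $ l"] by (rule mult_left_mono[OF gb1]) simp
  qed
  have "\<bar>LF C U U1 U2 x\<bar> \<le> (\<Sum>i\<in>UNIV. \<Sum>j\<in>UNIV. \<bar>sym_part C $ i $ j\<bar> * prodf e x) + (\<Sum>i\<in>UNIV. \<Sum>l\<in>UNIV. \<bar>C $ i $ l\<bar> * prodf e x)"
    unfolding LF_def by (rule order_trans[OF abs_triangle_ineq4 add_mono[OF A B]])
  also have "\<dots> = KC C * prodf e x" by (simp add: KC_def sum_distrib_right distrib_right)
  finally show ?thesis .
qed


lemma ee_cont: "continuous_on UNIV (ee \<alpha> k)"
  unfolding ee_def[abs_def] by (intro continuous_intros)

lemma ee_nonneg: "0 \<le> ee \<alpha> k y"
  unfolding ee_def by simp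

lemma sq_ineq1: "(1 + \<bar>y\<bar>)^2 \<le> 2 * (1 + y^2)" for y :: real
proof -
  have "0 \<le> (\<bar>y\<bar> - 1)^2" by simp
  then show ?thesis by (simp add: power2_eq_square algebra_simps)
qed

lemma sq_ineq2: "(a + 2 * b + c)^2 \<le> 3 * (a^2 + 4 * b^2 + c^2)" for a b c :: real
proof -
  have "0 \<le> (a - 2*b)^2 + (2*b - c)^2 + (a - c)^2" by simp
  then show ?thesis by (simp add: power2_eq_square algebra_simps)
qed

lemma ee_sq_int: "integrable lborel (\<lambda>y. (ee \<alpha> k y)^2 * gauss1 y)"
proof (rule Bochner_Integration.integrable_bound)
  define P where "P = He (\<alpha> k)"
  define Q where "Q = smult 5400 ([:1,0,1:] * (P * P + smult 4 (pderiv P * pderiv P) + pderiv (pderiv P) * pderiv (pderiv P)))"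
  show "integrable lborel (\<lambda>y. poly Q y * gauss1 y)" by (rule integrable_poly_gauss)
  show "(\<lambda>y. (ee \<alpha> k y)^2 * gauss1 y) \<in> borel_measurable lborel"
    using borel_measurable_continuous_onI[OF ee_cont[of \<alpha> k]] by (simp add: gauss1_def)
  show "AE y in lborel. norm ((ee \<alpha> k y)^2 * gauss1 y) \<le> norm (poly Q y * gauss1 y)"
  proof (intro AE_I2)
    fix y :: real
    define a where "a = \<bar>poly P y\<bar>"
    define b where "b = \<bar>poly (pderiv P) y\<bar>"
    define c where "c = \<bar>poly (pderiv (pderiv P)) y\<bar>"
    have abc: "0 \<le> a" "0 \<le> b" "0 \<le> c" by (simp_all add: a_def b_def c_def)
    have e: "ee \<alpha> k y = 30 * (1 + \<bar>y\<bar>) * (a + 2 * b + c)"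
      unfolding ee_def a_def b_def c_def P_def ..
    have "(ee \<alpha> k y)^2 = 900 * ((1 + \<bar>y\<bar>)^2 * (a + 2 * b + c)^2)"
      unfolding e by (simp only: power_mult_distrib) simp
    also have "\<dots> \<le> 900 * ((2 * (1 + y^2)) * (3 * (a^2 + 4 * b^2 + c^2)))"
      by (intro mult_left_mono mult_mono sq_ineq1 sq_ineq2) auto
    also have "\<dots> = poly Q y"
      unfolding Q_def a_def b_def c_def by (simp add: algebra_simps power2_eq_square)
    finally have le: "(ee \<alpha> k y)^2 \<le> poly Q y" .
    have g: "0 < gauss1 y" by (rule gauss1_pos)
    have "0 \<le> (ee \<alpha> k y)^2 * gauss1 y" using g by simp
    moreover have "(ee \<alpha> k y)^2 * gauss1 y \<le> poly Q y * gauss1 y"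
      using le g by (simp add: mult_right_mono)
    ultimately show "norm ((ee \<alpha> k y)^2 * gauss1 y) \<le> norm (poly Q y * gauss1 y)" by simp
  qed
qed

lemma E_int: "integrable lborel (\<lambda>x::real^'d. (prodf (ee \<alpha>) x)^2 * finf x)"
proof -
  have "integrable lborel (\<lambda>x::real^'d. \<Prod>k\<in>UNIV. (ee \<alpha> k (x$k))^2 * gauss1 (x$k))"
    by (rule integrable_vec_prod) (rule ee_sq_int)
  moreover have "(\<lambda>x::real^'d. \<Prod>k\<in>UNIV. (ee \<alpha> k (x$k))^2 * gauss1 (x$k)) = (\<lambda>x. (prodf (ee \<alpha>) x)^2 * finf x)"
    by (rule ext) (simp add: prodf_def finf_prod prod.distrib power_mult_distrib prod_power_distrib)
  ultimately show ?thesis by simp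
qed

lemma good_uu:
  "good (ee \<alpha>) (((uu \<alpha> n)(j := uu1 \<alpha> n j))(i := (if i = j then uu2 \<alpha> n j else uu1 \<alpha> n i)))"
  "good (ee \<alpha>) ((uu \<alpha> n)(i := uu1 \<alpha> n i))"
  "good (ee \<alpha>) (uu \<alpha> n)"
  unfolding good_def using uu_bounds by auto

lemma LF_cont:
  assumes "\<And>k. continuous_on UNIV (U k)" "\<And>k. continuous_on UNIV (U1 k)" "\<And>k. continuous_on UNIV (U2 k)"
  shows "continuous_on UNIV (LF C U U1 U2)"
proof -
  have c1: "continuous_on UNIV (prodf ((U(j := U1 j))(i := (if i = j then U2 j else U1 i))))" for i j
    by (rule prodf_cont) (auto simp: assms)
  have c2: "continuous_on UNIV (prodf (U(i := U1 i)))" for i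
    by (rule prodf_cont) (auto simp: assms)
  have c3: "continuous_on UNIV (\<lambda>x::real^'a. x $ l)" for l
    by (rule linear_continuous_on) (rule bounded_linear_vec_nth)
  show ?thesis unfolding LF_def[abs_def] Cv_sum
    by (intro continuous_intros c1 c2 c3)
qed

lemma Hpoly_LF: "Lstar C (Hpoly \<alpha>) = LF C (\<lambda>k. poly (He (\<alpha> k))) (\<lambda>k. poly (pderiv (He (\<alpha> k)))) (\<lambda>k. poly (pderiv (pderiv (He (\<alpha> k)))))"
  unfolding Hpoly_prodf by (rule Lstar_LF) (rule poly_DERIV)+

lemma uu_LF: "Lstar C (prodf (uu \<alpha> n)) = LF C (uu \<alpha> n) (uu1 \<alpha> n) (uu2 \<alpha> n)"
  by (rule Lstar_LF[OF uu_deriv uu1_deriv])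


lemma weak_limit:
  fixes f' ft :: "real^'d \<Rightarrow> real" and C :: "real^'d^'d"
  assumes f'H: "inH f'" and ftH: "inH ft"
    and weak: "\<And>\<phi>. test_fun \<phi> \<Longrightarrow> (\<integral>x. f' x * \<phi> x \<partial>lborel) = (\<integral>x. ft x * Lstar C \<phi> x \<partial>lborel)"
  shows "(\<integral>x. f' x * Hpoly \<alpha> x \<partial>lborel) = (\<integral>x. ft x * Lstar C (Hpoly \<alpha>) x \<partial>lborel)"
proof -
  define E where "E = prodf (ee \<alpha>)"
  have Em[measurable]: "E \<in> borel_measurable borel"
    unfolding E_def by (rule prodf_meas[OF ee_cont])
  have f'm[measurable]: "f' \<in> borel_measurable borel" and ftm[measurable]: "ft \<in> borel_measurable borel"
    using f'H ftH by (simp_all add: inH_meas)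
  have iE1: "integrable lborel (\<lambda>x. f' x * E x)"
    by (rule integrable_H_mult[OF f'H Em]) (simp add: E_def E_int)
  have iE2: "integrable lborel (\<lambda>x. ft x * E x)"
    by (rule integrable_H_mult[OF ftH Em]) (simp add: E_def E_int)
  have uum[measurable]: "prodf (uu \<alpha> n) \<in> borel_measurable borel" for n
    by (rule prodf_meas[OF uu_cont(1)])
  have LFm[measurable]: "LF C (uu \<alpha> n) (uu1 \<alpha> n) (uu2 \<alpha> n) \<in> borel_measurable borel" for n
    by (rule borel_measurable_continuous_onI[OF LF_cont[OF uu_cont]])
  define P where "P = (\<lambda>k. poly (He (\<alpha> k)))"
  define P1 where "P1 = (\<lambda>k. poly (pderiv (He (\<alpha> k))))"
  define P2 where "P2 = (\<lambda>k. poly (pderiv (pderiv (He (\<alpha> k)))))"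
  have LFP: "Lstar C (Hpoly \<alpha>) = LF C P P1 P2" unfolding P_def P1_def P2_def by (rule Hpoly_LF)
  have LFPm[measurable]: "LF C P P1 P2 \<in> borel_measurable borel"
    by (rule borel_measurable_continuous_onI[OF LF_cont]) (auto simp: P_def P1_def P2_def intro: continuous_intros)
  have lim1: "(\<lambda>n. \<integral>x. f' x * prodf (uu \<alpha> n) x \<partial>lborel) \<longlonglongrightarrow> (\<integral>x. f' x * Hpoly \<alpha> x \<partial>lborel)"
  proof (rule integral_dominated_convergence[where w = "\<lambda>x. \<bar>f' x * E x\<bar>"])
    show "(\<lambda>x. f' x * Hpoly \<alpha> x) \<in> borel_measurable lborel" by simp
    show "(\<lambda>x. f' x * prodf (uu \<alpha> n) x) \<in> borel_measurable lborel" for n by simp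
    show "integrable lborel (\<lambda>x. \<bar>f' x * E x\<bar>)" using iE1 by (rule integrable_abs)
    show "AE x in lborel. (\<lambda>n. f' x * prodf (uu \<alpha> n) x) \<longlonglongrightarrow> f' x * Hpoly \<alpha> x"
    proof (intro AE_I2 tendsto_mult tendsto_const)
      fix x :: "real^'d"
      show "(\<lambda>n. prodf (uu \<alpha> n) x) \<longlonglongrightarrow> Hpoly \<alpha> x"
        unfolding Hpoly_prodf by (rule prodf_lim) (rule uu_lim)
    qed
    show "AE x in lborel. norm (f' x * prodf (uu \<alpha> n) x) \<le> \<bar>f' x * E x\<bar>" for n
    proof (intro AE_I2)
      fix x :: "real^'d"
      have "\<bar>prodf (uu \<alpha> n) x\<bar> \<le> E x" unfolding E_def by (rule prodf_bound[OF good_D(1)[OF good_uu(3)]])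
      moreover have "0 \<le> E x" unfolding E_def prodf_def by (intro prod_nonneg) (simp add: ee_nonneg)
      ultimately show "norm (f' x * prodf (uu \<alpha> n) x) \<le> \<bar>f' x * E x\<bar>"
        by (simp add: abs_mult mult_left_mono)
    qed
  qed
  have lim2: "(\<lambda>n. \<integral>x. ft x * LF C (uu \<alpha> n) (uu1 \<alpha> n) (uu2 \<alpha> n) x \<partial>lborel) \<longlonglongrightarrow> (\<integral>x. ft x * LF C P P1 P2 x \<partial>lborel)"
  proof (rule integral_dominated_convergence[where w = "\<lambda>x. KC C * \<bar>ft x * E x\<bar>"])
    show "(\<lambda>x. ft x * LF C P P1 P2 x) \<in> borel_measurable lborel" by simp
    show "(\<lambda>x. ft x * LF C (uu \<alpha> n) (uu1 \<alpha> n) (uu2 \<alpha> n) x) \<in> borel_measurable lborel" for n by simp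
    show "integrable lborel (\<lambda>x. KC C * \<bar>ft x * E x\<bar>)" using iE2 by (intro integrable_mult_right integrable_abs)
    show "AE x in lborel. (\<lambda>n. ft x * LF C (uu \<alpha> n) (uu1 \<alpha> n) (uu2 \<alpha> n) x) \<longlonglongrightarrow> ft x * LF C P P1 P2 x"
    proof (intro AE_I2 tendsto_mult tendsto_const)
      fix x :: "real^'d"
      show "(\<lambda>n. LF C (uu \<alpha> n) (uu1 \<alpha> n) (uu2 \<alpha> n) x) \<longlonglongrightarrow> LF C P P1 P2 x"
        unfolding P_def P1_def P2_def by (rule LF_lim) (rule uu_lim)+
    qed
    show "AE x in lborel. norm (ft x * LF C (uu \<alpha> n) (uu1 \<alpha> n) (uu2 \<alpha> n) x) \<le> KC C * \<bar>ft x * E x\<bar>" for n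
    proof (intro AE_I2)
      fix x :: "real^'d"
      have "\<bar>LF C (uu \<alpha> n) (uu1 \<alpha> n) (uu2 \<alpha> n) x\<bar> \<le> KC C * E x"
        unfolding E_def by (rule LF_bound[OF good_uu(1) good_uu(2)])
      moreover have "0 \<le> E x" unfolding E_def prodf_def by (intro prod_nonneg) (simp add: ee_nonneg)
      ultimately have "\<bar>ft x\<bar> * \<bar>LF C (uu \<alpha> n) (uu1 \<alpha> n) (uu2 \<alpha> n) x\<bar> \<le> \<bar>ft x\<bar> * (KC C * E x)"
        by (simp add: mult_left_mono)
      then show "norm (ft x * LF C (uu \<alpha> n) (uu1 \<alpha> n) (uu2 \<alpha> n) x) \<le> KC C * \<bar>ft x * E x\<bar>"
        using \<open>0 \<le> E x\<close> by (simp add: abs_mult mult_ac)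
    qed
  qed
  have eq: "(\<integral>x. f' x * prodf (uu \<alpha> n) x \<partial>lborel) = (\<integral>x. ft x * LF C (uu \<alpha> n) (uu1 \<alpha> n) (uu2 \<alpha> n) x \<partial>lborel)" for n
    using weak[OF test_fun_uu[of \<alpha> n]] by (simp add: uu_LF)
  have "(\<lambda>n. \<integral>x. f' x * prodf (uu \<alpha> n) x \<partial>lborel) \<longlonglongrightarrow> (\<integral>x. ft x * LF C P P1 P2 x \<partial>lborel)"
    using lim2 by (simp add: eq)
  from LIMSEQ_unique[OF lim1 this] show ?thesis by (simp add: LFP)
qed


lemma hcoeff_div: "hcoeff u \<beta> / multinom \<beta> = Hinner u (g_alpha \<beta>) / fact (mabs \<beta>)"
proof -
  have nz: "(\<Prod>k\<in>UNIV. fact (\<beta> k) :: real) \<noteq> 0" by (simp add: prod_zero_iff)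
  have "multinom \<beta> \<noteq> 0" using multinom_N[of \<beta>] by auto
  then show ?thesis
    unfolding hcoeff_def Hnorm_g_sq using nz multinom_N[of \<beta>]
    by (simp add: field_simps)
qed

lemma mabs_upd: "mabs (\<alpha>(i := v)) + \<alpha> i = mabs \<alpha> + v"
proof -
  have "mabs (\<alpha>(i := v)) = v + (\<Sum>k\<in>UNIV-{i}. \<alpha> k)"
    unfolding mabs_def by (subst sum.remove[of _ i]) (auto intro!: sum.cong)
  moreover have "mabs \<alpha> = \<alpha> i + (\<Sum>k\<in>UNIV-{i}. \<alpha> k)"
    unfolding mabs_def by (subst sum.remove[of _ i]) auto
  ultimately show ?thesis by simp
qed

lemma mabs_beta: "\<alpha> j \<ge> 1 \<Longrightarrow> mabs (mplus (mminus \<alpha> j) l) = mabs \<alpha>"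
  using mabs_upd[of \<alpha> j "\<alpha> j - 1"] mabs_upd[of "mminus \<alpha> j" l "mminus \<alpha> j l + 1"]
  unfolding mplus_def mminus_def by simp

lemma integral_lin2:
  fixes ft :: "real^'d \<Rightarrow> real" and c :: "'d \<Rightarrow> 'd \<Rightarrow> real" and H :: "'d \<Rightarrow> 'd \<Rightarrow> real^'d \<Rightarrow> real"
  assumes "\<And>j l. integrable lborel (\<lambda>x. ft x * H j l x)"
  shows "(\<integral>x. ft x * (- (\<Sum>j\<in>UNIV. \<Sum>l\<in>UNIV. c j l * H j l x)) \<partial>lborel)
       = - (\<Sum>j\<in>UNIV. \<Sum>l\<in>UNIV. c j l * (\<integral>x. ft x * H j l x \<partial>lborel))"
proof -
  have "(\<lambda>x. ft x * (- (\<Sum>j\<in>UNIV. \<Sum>l\<in>UNIV. c j l * H j l x))) = (\<lambda>x. - (\<Sum>j\<in>UNIV. \<Sum>l\<in>UNIV. c j l * (ft x * H j l x)))"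
    by (rule ext) (simp add: sum_distrib_left mult_ac)
  then show ?thesis
    using assms by (simp add: Bochner_Integration.integral_sum integrable_mult_right)
qed

theorem proposition5p17:
  fixes C :: "real^'d^'d" and f :: "real \<Rightarrow> real^'d \<Rightarrow> real"
    and m :: nat and \<alpha> :: "'d \<Rightarrow> nat" and t :: real
  assumes "conditionA C"
    and "FP_solution_H C f"
    and "m \<ge> 1"
    and "mabs \<alpha> = m"
    and "t > 0"
  defines "D \<equiv> (\<lambda>\<beta> s. hcoeff (f s) \<beta> / multinom \<beta>)"
  shows "((\<lambda>s. D \<alpha> s) has_real_derivative
           - (\<Sum>j\<in>UNIV. \<Sum>l\<in>UNIV. real (\<alpha> j) * C $ j $ l * D (mplus (mminus \<alpha> j) l) t))
         (at t)"
proof -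
  have fH: "\<And>s. s > 0 \<Longrightarrow> inH (f s)" using assms(2) unfolding FP_solution_H_def by blast
  obtain f' where f'H: "inH f'"
    and lim: "((\<lambda>h. Hnorm (\<lambda>x. (f (t + h) x - f t x) / h - f' x)) \<longlongrightarrow> 0) (at 0)"
    and weak: "\<And>\<phi>. test_fun \<phi> \<Longrightarrow> (\<integral>x. f' x * \<phi> x \<partial>lborel) = (\<integral>x. f t x * Lstar C \<phi> x \<partial>lborel)"
    using assms(2) \<open>t > 0\<close> unfolding FP_solution_H_def by blast
  have Dform: "D \<beta> s = Hinner (f s) (g_alpha \<beta>) / fact (mabs \<beta>)" for \<beta> s
    unfolding D_def by (rule hcoeff_div)
  have d: "((\<lambda>s. Hinner (f s) (g_alpha \<alpha>)) has_real_derivative Hinner f' (g_alpha \<alpha>)) (at t)"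
    by (rule deriv_Hinner[OF fH f'H inH_g \<open>t > 0\<close> lim])
  have d2: "((\<lambda>s. D \<alpha> s) has_real_derivative Hinner f' (g_alpha \<alpha>) / fact m) (at t)"
    using DERIV_cdivide[OF d, of "fact m"] by (simp add: Dform assms(4))
  have intb: "integrable lborel (\<lambda>x. f t x * Hpoly \<beta> x)" for \<beta>
    by (rule integrable_H_mult[OF fH[OF \<open>t > 0\<close>] Hpoly_meas Hpoly_sq_int])
  have "Hinner f' (g_alpha \<alpha>) = (\<integral>x. f' x * Hpoly \<alpha> x \<partial>lborel)" by (rule Hinner_g)
  also have "\<dots> = (\<integral>x. f t x * Lstar C (Hpoly \<alpha>) x \<partial>lborel)"
    by (rule weak_limit[OF f'H fH[OF \<open>t > 0\<close>] weak])
  also have "\<dots> = (\<integral>x. f t x * (- (\<Sum>j\<in>UNIV. \<Sum>l\<in>UNIV. (real (\<alpha> j) * C $ j $ l) * Hpoly (mplus (mminus \<alpha> j) l) x)) \<partial>lborel)"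
    by (simp add: Lstar_Hpoly)
  also have "\<dots> = - (\<Sum>j\<in>UNIV. \<Sum>l\<in>UNIV. (real (\<alpha> j) * C $ j $ l) * (\<integral>x. f t x * Hpoly (mplus (mminus \<alpha> j) l) x \<partial>lborel))"
    by (rule integral_lin2) (rule intb)
  finally have hv: "Hinner f' (g_alpha \<alpha>) = - (\<Sum>j\<in>UNIV. \<Sum>l\<in>UNIV. (real (\<alpha> j) * C $ j $ l) * (\<integral>x. f t x * Hpoly (mplus (mminus \<alpha> j) l) x \<partial>lborel))" .
  have terms: "real (\<alpha> j) * C $ j $ l * D (mplus (mminus \<alpha> j) l) t
      = (real (\<alpha> j) * C $ j $ l) * (\<integral>x. f t x * Hpoly (mplus (mminus \<alpha> j) l) x \<partial>lborel) / fact m" for j l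
  proof (cases "\<alpha> j = 0")
    case True
    then show ?thesis by simp
  next
    case False
    then have "mabs (mplus (mminus \<alpha> j) l) = m" using mabs_beta[of \<alpha> j l] assms(4) by simp
    then show ?thesis by (simp add: Dform Hinner_g)
  qed
  have "Hinner f' (g_alpha \<alpha>) / fact m = - (\<Sum>j\<in>UNIV. \<Sum>l\<in>UNIV. real (\<alpha> j) * C $ j $ l * D (mplus (mminus \<alpha> j) l) t)"
    unfolding hv terms by (simp add: sum_divide_distrib)
  with d2 show ?thesis by simp
qed


end
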